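(* Consider the spectrum-oligopoly game described in the context on a mean valid conflict graph $G$ characterized by $I_1,\dots,I_d$ with $M_s=|I_s|$, $M_1\ge\dots\ge M_d$. Let $(t_{s,j})$ be the unique family such that for each $j\in\{1,\dots,n\}$: $t_{s,j}\ge0$, $\sum_s t_{s,j}=1$, and for some $d_j\in\{1,\dots,d\}$, $t_{s,j}>0$ for $s\le d_j$, $t_{s,j}=0$ for $s>d_j$, and $M_1W(\gamma_{1,j})=\dots=M_{d_j}W(\gamma_{d_j,j})\ge M_{d_j+1}W(\gamma_{d_j+1,j})\ge\dots\ge M_dW(\gamma_{d,j})$, where $\gamma_{s,j}=\sum_{k=j}^nt_{s,k}q_k$. Consider the symmetric strategy profile in which every primary, in state $j\in\{1,\dots,n\}$, selects $I_s$ with probability $t_{s,j}$ and, at every node of $I_s$, draws its penalty from the distribution $\phi_j$ defined in the context with $\alpha_k=q_kt_{s,k}$ ($k=1,\dots,n$). This strategy profile is a Nash equilibrium.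
   Context: Model. There are $l$ primaries and at each node of a finite conflict graph $G=(V,E)$ there are $m$ secondaries, with integers $1\le m<l$. Each primary owns one channel whose state $j\in\{0,1,\dots,n\}$ is the same at every node; the states of the primaries are independent, each equal to $j$ with probability $q_j$, with $\sum_{j=1}^n q_j<1$; state $0$ means the channel cannot be sold. Constants $c$ (cost per sale) and $v$ (maximal accepted penalty). For $j=1,\dots,n$, $g_j$ is continuous strictly increasing with $g_i(p)<g_j(p)$ whenever $i>j$; $f_j=g_j^{-1}$; for all $i<j$ and $x>y>g_i(c)$: $\frac{f_i(y)-c}{f_j(y)-c}<\frac{f_i(x)-c}{f_j(x)-c}$; and $f_1(v)>c$. Each primary knows only its own state; in state $j\ge1$ it chooses (possibly randomly) an independent set of $G$ and a penalty at each node of it; in state $0$ it offers nothing. At each node, of the $Y$ channels offered with penalty $\le v$, the $\min(Y,m)$ lowest-penalty ones are sold (ties broken uniformly at random). A primary in state $j$ selling at penalty $x$ at a node earns $f_j(x)-c$ there, else $0$; payoff is summed over nodes. A Nash equilibrium: no primary in any state $j$ can increase its expected payoff by unilateral deviation (deviations may use any independent set of $G$ and any penalties). Notation: $w(x)=\sum_{i=m}^{l-1}\binom{l-1}{i}x^i(1-x)^{l-1-i}$, $W=1-w$. Mean valid graph: $V$ is the disjoint union of $d\ge2$ maximal independent sets $I_1,\dots,I_d$ with $M_1\ge\dots\ge M_d$, $M_s=|I_s|$, and every independent set $I$ satisfies $\sum_s|I\cap I_s|/M_s\le1$. Penalty distribution: given $\alpha_1,\dots,\alpha_n\ge0$ with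 $\sum\alpha_k<1$, let $\Gamma_j=\sum_{k=j}^n\alpha_k$ ($\Gamma_{n+1}=0$), $U_1=v$, and recursively for $j=1,\dots,n$: $p_j=c+(f_j(U_j)-c)W(\Gamma_j)$, $L_j=g_j\!\left(\frac{p_j-c}{W(\Gamma_{j+1})}+c\right)$, $U_{j+1}=L_j$. For $j$ with $\alpha_j>0$, $\phi_j$ is the CDF with $\phi_j(x)=0$ for $x<L_j$, $\phi_j(x)=\frac1{\alpha_j}\left(w^{-1}\!\left(\frac{f_j(x)-p_j}{f_j(x)-c}\right)-\Gamma_{j+1}\right)$ for $L_j\le x\le U_j$, $\phi_j(x)=1$ for $x>U_j$. *)

theory Defs
  imports "HOL-Probability.Probability"
begin

text \<open>The conflict graph has vertex type 'v (finite, V = UNIV) and edge relation E.\<close>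

definition indep_set :: "('v \<Rightarrow> 'v \<Rightarrow> bool) \<Rightarrow> 'v set \<Rightarrow> bool" where
  "indep_set E S \<longleftrightarrow> (\<forall>u\<in>S. \<forall>w\<in>S. \<not> E u w)"

definition maximal_indep_set :: "('v \<Rightarrow> 'v \<Rightarrow> bool) \<Rightarrow> 'v set \<Rightarrow> bool" where
  "maximal_indep_set E S \<longleftrightarrow> indep_set E S \<and> (\<forall>u. u \<notin> S \<longrightarrow> \<not> indep_set E (insert u S))"

definition mean_valid :: "('v \<Rightarrow> 'v \<Rightarrow> bool) \<Rightarrow> nat \<Rightarrow> (nat \<Rightarrow> 'v set) \<Rightarrow> bool" where
  "mean_valid E d I \<longleftrightarrow>
     2 \<le> d \<and>
     (\<forall>s\<in>{1..d}. maximal_indep_set E (I s)) \<and>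
     (\<forall>s\<in>{1..d}. \<forall>s'\<in>{1..d}. s \<noteq> s' \<longrightarrow> I s \<inter> I s' = {}) \<and>
     (\<Union>s\<in>{1..d}. I s) = UNIV \<and>
     (\<forall>s\<in>{1..d}. \<forall>s'\<in>{1..d}. s \<le> s' \<longrightarrow> card (I s') \<le> card (I s)) \<and>
     (\<forall>S. indep_set E S \<longrightarrow> (\<Sum>s=1..d. real (card (S \<inter> I s)) / real (card (I s))) \<le> 1)"

definition wfun :: "nat \<Rightarrow> nat \<Rightarrow> real \<Rightarrow> real" where
  "wfun l m x = (\<Sum>i=m..l-1. real ((l-1) choose i) * x ^ i * (1 - x) ^ (l - 1 - i))"

definition Wfun :: "nat \<Rightarrow> nat \<Rightarrow> real \<Rightarrow> real" where
  "Wfun l m x = 1 - wfun l m x"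

definition winv :: "nat \<Rightarrow> nat \<Rightarrow> real \<Rightarrow> real" where
  "winv l m y = (THE x. 0 \<le> x \<and> x \<le> 1 \<and> wfun l m x = y)"

definition Gam :: "nat \<Rightarrow> (nat \<Rightarrow> real) \<Rightarrow> nat \<Rightarrow> real" where
  "Gam n alpha j = (\<Sum>k=j..n. alpha k)"

text \<open>price_j as a function of the upper end u = U_j.\<close>
definition pr_of :: "nat \<Rightarrow> nat \<Rightarrow> real \<Rightarrow> (nat \<Rightarrow> real \<Rightarrow> real) \<Rightarrow> nat \<Rightarrow> (nat \<Rightarrow> real)
    \<Rightarrow> nat \<Rightarrow> real \<Rightarrow> real" where
  "pr_of l m c f n alpha j u = c + (f j u - c) * Wfun l m (Gam n alpha j)"

text \<open>L_j as a function of the upper end u = U_j.\<close>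
definition low_of :: "nat \<Rightarrow> nat \<Rightarrow> real \<Rightarrow> (nat \<Rightarrow> real \<Rightarrow> real) \<Rightarrow> (nat \<Rightarrow> real \<Rightarrow> real)
    \<Rightarrow> nat \<Rightarrow> (nat \<Rightarrow> real) \<Rightarrow> nat \<Rightarrow> real \<Rightarrow> real" where
  "low_of l m c f g n alpha j u =
     g j ((pr_of l m c f n alpha j u - c) / Wfun l m (Gam n alpha (Suc j)) + c)"

text \<open>Upper ends: U_1 = v, U_(j+1) = L_j (index 0 is unused).\<close>
fun Upen :: "nat \<Rightarrow> nat \<Rightarrow> real \<Rightarrow> real \<Rightarrow> (nat \<Rightarrow> real \<Rightarrow> real) \<Rightarrow> (nat \<Rightarrow> real \<Rightarrow> real)
    \<Rightarrow> nat \<Rightarrow> (nat \<Rightarrow> real) \<Rightarrow> nat \<Rightarrow> real" where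
  "Upen l m c v f g n alpha 0 = v"
| "Upen l m c v f g n alpha (Suc 0) = v"
| "Upen l m c v f g n alpha (Suc (Suc j)) =
     low_of l m c f g n alpha (Suc j) (Upen l m c v f g n alpha (Suc j))"

definition Lpen :: "nat \<Rightarrow> nat \<Rightarrow> real \<Rightarrow> real \<Rightarrow> (nat \<Rightarrow> real \<Rightarrow> real) \<Rightarrow> (nat \<Rightarrow> real \<Rightarrow> real)
    \<Rightarrow> nat \<Rightarrow> (nat \<Rightarrow> real) \<Rightarrow> nat \<Rightarrow> real" where
  "Lpen l m c v f g n alpha j = low_of l m c f g n alpha j (Upen l m c v f g n alpha j)"

definition ppr :: "nat \<Rightarrow> nat \<Rightarrow> real \<Rightarrow> real \<Rightarrow> (nat \<Rightarrow> real \<Rightarrow> real) \<Rightarrow> (nat \<Rightarrow> real \<Rightarrow> real)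
    \<Rightarrow> nat \<Rightarrow> (nat \<Rightarrow> real) \<Rightarrow> nat \<Rightarrow> real" where
  "ppr l m c v f g n alpha j = pr_of l m c f n alpha j (Upen l m c v f g n alpha j)"

text \<open>The CDF phi_j (meaningful when alpha_j > 0).\<close>
definition phi :: "nat \<Rightarrow> nat \<Rightarrow> real \<Rightarrow> real \<Rightarrow> (nat \<Rightarrow> real \<Rightarrow> real) \<Rightarrow> (nat \<Rightarrow> real \<Rightarrow> real)
    \<Rightarrow> nat \<Rightarrow> (nat \<Rightarrow> real) \<Rightarrow> nat \<Rightarrow> real \<Rightarrow> real" where
  "phi l m c v f g n alpha j x =
     (if x < Lpen l m c v f g n alpha j then 0
      else if x \<le> Upen l m c v f g n alpha j then
        (winv l m ((f j x - ppr l m c v f g n alpha j) / (f j x - c)) - Gam n alpha (Suc j)) / alpha j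
      else 1)"

text \<open>An action of a primary: an (independent) set of nodes and a penalty at every node
  (only the penalties on the chosen set matter).\<close>
type_synonym 'v action = "'v set \<times> ('v \<Rightarrow> real)"

definition actM :: "('v::finite) action measure" where
  "actM = count_space UNIV \<Otimes>\<^sub>M (\<Pi>\<^sub>M u\<in>UNIV. (borel :: real measure))"

definition no_offer :: "'v action" where
  "no_offer = ({}, (\<lambda>_. 0))"

text \<open>Probability that a channel offered at node u with penalty xu is sold, given the actions
  ys k of the other primaries k in O (ties broken uniformly at random).\<close>
definition win_prob :: "nat \<Rightarrow> real \<Rightarrow> nat set \<Rightarrow> (nat \<Rightarrow> 'v action) \<Rightarrow> 'v \<Rightarrow> real \<Rightarrow> real" where
  "win_prob m v Opp ys u xu =
     (let A = card {k\<in>Opp. u \<in> fst (ys k) \<and> snd (ys k) u \<le> v \<and> snd (ys k) u < xu};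
          T = card {k\<in>Opp. u \<in> fst (ys k) \<and> snd (ys k) u \<le> v \<and> snd (ys k) u = xu}
      in if xu \<le> v \<and> A < m then min 1 ((real m - real A) / (real T + 1)) else 0)"

definition real_payoff :: "nat \<Rightarrow> nat \<Rightarrow> real \<Rightarrow> real \<Rightarrow> (real \<Rightarrow> real) \<Rightarrow> nat
    \<Rightarrow> ('v::finite) action \<Rightarrow> (nat \<Rightarrow> 'v action) \<Rightarrow> real" where
  "real_payoff l m c v fj i a ys =
     (\<Sum>u\<in>fst a. (fj (snd a u) - c) * win_prob m v ({..<l} - {i}) ys u (snd a u))"

text \<open>A strategy maps each state j \<ge> 1 to a probability measure on actions. The law of the
  action of a primary with strategy strategy of k, including the random state (Q is the law of the
  state; in state 0 nothing is offered).\<close>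
definition act_law :: "nat pmf \<Rightarrow> (nat \<Rightarrow> ('v::finite) action measure) \<Rightarrow> 'v action measure" where
  "act_law Q sk = measure_pmf Q \<bind> (\<lambda>s. if s = 0 then return actM no_offer else sk s)"

definition exp_payoff :: "nat \<Rightarrow> nat \<Rightarrow> real \<Rightarrow> real \<Rightarrow> (nat \<Rightarrow> real \<Rightarrow> real) \<Rightarrow> nat pmf
    \<Rightarrow> (nat \<Rightarrow> nat \<Rightarrow> ('v::finite) action measure) \<Rightarrow> nat \<Rightarrow> nat \<Rightarrow> 'v action \<Rightarrow> real" where
  "exp_payoff l m c v f Q prof i j a =
     (\<integral>ys. real_payoff l m c v (f j) i a ys
        \<partial>(\<Pi>\<^sub>M k\<in>{..<l} - {i}. act_law Q (prof k)))"

definition strat_payoff :: "nat \<Rightarrow> nat \<Rightarrow> real \<Rightarrow> real \<Rightarrow> (nat \<Rightarrow> real \<Rightarrow> real) \<Rightarrow> nat pmf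
    \<Rightarrow> (nat \<Rightarrow> nat \<Rightarrow> ('v::finite) action measure) \<Rightarrow> nat \<Rightarrow> nat \<Rightarrow> real" where
  "strat_payoff l m c v f Q prof i j =
     (\<integral>a. exp_payoff l m c v f Q prof i j a \<partial>(prof i j))"

definition nash_eq :: "('v \<Rightarrow> 'v \<Rightarrow> bool) \<Rightarrow> nat \<Rightarrow> nat \<Rightarrow> nat \<Rightarrow> real \<Rightarrow> real
    \<Rightarrow> (nat \<Rightarrow> real \<Rightarrow> real) \<Rightarrow> nat pmf \<Rightarrow> (nat \<Rightarrow> nat \<Rightarrow> ('v::finite) action measure) \<Rightarrow> bool" where
  "nash_eq E l m n c v f Q prof \<longleftrightarrow>
     (\<forall>i<l. \<forall>j\<in>{1..n}.
        prob_space (prof i j) \<and> sets (prof i j) = sets actM \<and>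
        (AE a in prof i j. indep_set E (fst a)) \<and>
        (\<forall>a. indep_set E (fst a) \<longrightarrow>
              exp_payoff l m c v f Q prof i j a \<le> strat_payoff l m c v f Q prof i j))"

definition pen_law :: "nat \<Rightarrow> nat \<Rightarrow> real \<Rightarrow> real \<Rightarrow> (nat \<Rightarrow> real \<Rightarrow> real) \<Rightarrow> (nat \<Rightarrow> real \<Rightarrow> real)
    \<Rightarrow> nat \<Rightarrow> nat pmf \<Rightarrow> (nat \<Rightarrow> nat \<Rightarrow> real) \<Rightarrow> ('v::finite) set \<Rightarrow> nat \<Rightarrow> nat \<Rightarrow> ('v \<Rightarrow> real) measure" where
  "pen_law l m c v f g n Q t Is s j =
     (\<Pi>\<^sub>M u\<in>UNIV. if u \<in> Is
        then interval_measure (phi l m c v f g n (\<lambda>k. pmf Q k * t s k) j)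
        else return borel 0)"

definition eq_strategy :: "nat \<Rightarrow> nat \<Rightarrow> real \<Rightarrow> real \<Rightarrow> (nat \<Rightarrow> real \<Rightarrow> real) \<Rightarrow> (nat \<Rightarrow> real \<Rightarrow> real)
    \<Rightarrow> nat \<Rightarrow> nat pmf \<Rightarrow> nat \<Rightarrow> (nat \<Rightarrow> ('v::finite) set) \<Rightarrow> (nat \<Rightarrow> nat \<Rightarrow> real)
    \<Rightarrow> nat \<Rightarrow> 'v action measure" where
  "eq_strategy l m c v f g n Q d I t j =
     measure_pmf (embed_pmf (\<lambda>s. if s \<in> {1..d} then t s j else 0)) \<bind>
       (\<lambda>s. distr (pen_law l m c v f g n Q t (I s) s j) actM (\<lambda>x. (I s, x)))"

end

theory Submission
  imports Defs
begin


definition Sb :: "nat \<Rightarrow> nat \<Rightarrow> real \<Rightarrow> real" where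
  "Sb N m x = (\<Sum>i<m. real (N choose i) * x ^ i * (1 - x) ^ (N - i))"

lemma Wfun_Sb:
  assumes "m < l"
  shows "Wfun l m x = Sb (l-1) m x"
proof -
  have "1 = (x + (1 - x)) ^ (l-1)" by simp
  also have "\<dots> = (\<Sum>i\<le>l-1. real ((l-1) choose i) * x ^ i * (1 - x) ^ (l - 1 - i))"
    by (subst binomial_ring) (simp add: mult.assoc)
  also have "{..l-1} = {..<m} \<union> {m..l-1}" using assms by auto
  also have "(\<Sum>i\<in>{..<m} \<union> {m..l-1}. real ((l-1) choose i) * x ^ i * (1 - x) ^ (l - 1 - i))
      = Sb (l-1) m x + wfun l m x"
    by (subst sum.union_disjoint) (auto simp: Sb_def wfun_def)
  finally show ?thesis by (simp add: Wfun_def)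
qed

lemma d1: "((\<lambda>x::real. 1 - x) has_real_derivative -1) (at x)"
  using DERIV_diff[OF DERIV_const[of 1] DERIV_ident] by simp

lemma dterm:
  fixes m N :: nat and c::real
  shows "((\<lambda>x. c * x ^ m * (1 - x) ^ (N - m)) has_real_derivative
      c * (real m * x^(m-1) * (1-x)^(N-m) - real (N-m) * x^m * (1-x)^(N-m-1))) (at x)"
proof -
  have a: "((\<lambda>x. c * x ^ m) has_real_derivative c * (real m * x^(m-1))) (at x)"
    using DERIV_cmult[OF DERIV_pow[of m x]] by simp
  have b: "((\<lambda>x. (1 - x) ^ (N-m)) has_real_derivative - (real (N-m) * (1-x)^(N-m-1))) (at x)"
    using DERIV_power[OF d1, of "N-m"] by simp
  from DERIV_mult[OF a b] show ?thesis by (simp add: algebra_simps)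
qed

lemma Sb_deriv:
  assumes "1 \<le> m" "m \<le> N"
  shows "(Sb N m has_real_derivative
          - (real N * real ((N-1) choose (m-1)) * x ^ (m-1) * (1-x) ^ (N-m))) (at x)"
  using assms
proof (induction m rule: nat_induct_at_least)
  case base
  have "Sb N 1 = (\<lambda>x. (1 - x) ^ N)" by (simp add: Sb_def fun_eq_iff)
  moreover have "((\<lambda>x::real. (1 - x) ^ N) has_real_derivative - (real N * (1-x)^(N-1))) (at x)"
    using DERIV_power[OF d1, of N] by simp
  ultimately show ?case by simp
next
  case (Suc m)
  have eq: "Sb N (Suc m) = (\<lambda>x. Sb N m x + real (N choose m) * x ^ m * (1 - x) ^ (N - m))"
    by (simp add: Sb_def fun_eq_iff)
  have IH: "(Sb N m has_real_derivative
          - (real N * real ((N-1) choose (m-1)) * x ^ (m-1) * (1-x) ^ (N-m))) (at x)"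
    using Suc by simp
  have a1: "real m * real (N choose m) = real N * real ((N-1) choose (m-1))"
  proof -
    have "Suc (m-1) * (N choose Suc (m-1)) = N * ((N - 1) choose (m-1))"
      by (rule binomial_absorption)
    then have "m * (N choose m) = N * ((N - 1) choose (m-1))" using Suc(1) by simp
    then have "real (m * (N choose m)) = real (N * ((N - 1) choose (m-1)))" by simp
    then show ?thesis by simp
  qed
  have a2: "real (N-m) * real (N choose m) = real N * real ((N-1) choose m)"
  proof -
    have "real ((N-m) * (N choose m)) = real (N * ((N-1) choose m))"
      using binomial_absorb_comp[of N m] by simp
    then show ?thesis by simp
  qed
  from DERIV_add[OF IH dterm[of "real (N choose m)" m N x]]
  have "(Sb N (Suc m) has_real_derivative
     - (real N * real ((N-1) choose (m-1)) * x ^ (m-1) * (1-x) ^ (N-m)) +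
     real (N choose m) * (real m * x^(m-1) * (1-x)^(N-m) - real (N-m) * x^m * (1-x)^(N-m-1))) (at x)"
    by (simp add: eq)
  moreover have "- (real N * real ((N-1) choose (m-1)) * x ^ (m-1) * (1-x) ^ (N-m)) +
     real (N choose m) * (real m * x^(m-1) * (1-x)^(N-m) - real (N-m) * x^m * (1-x)^(N-m-1))
     = - (real (N-m) * real (N choose m)) * x^m * (1-x)^(N-m-1)"
  proof -
    have e: "real (N choose m) * (real m * x^(m-1) * (1-x)^(N-m)) = (real m * real (N choose m)) * (x^(m-1) * (1-x)^(N-m))"
      by (simp add: mult_ac)
    also have "\<dots> = real N * real ((N-1) choose (m-1)) * x ^ (m-1) * (1-x) ^ (N-m)"
      unfolding a1 by (simp add: mult_ac)
    finally show ?thesis unfolding right_diff_distrib by (simp add: algebra_simps)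
  qed
  ultimately show ?case using a2 by simp
qed

lemma Sb_strict:
  assumes "1 \<le> m" "m \<le> N" "0 \<le> a" "a < b" "b \<le> 1"
  shows "Sb N m b < Sb N m a"
proof -
  have "\<exists>z>a. z < b \<and> Sb N m b - Sb N m a = (b - a) * (- (real N * real ((N-1) choose (m-1)) * z ^ (m-1) * (1-z) ^ (N-m)))"
    by (rule MVT2[OF \<open>a < b\<close>]) (rule Sb_deriv[OF assms(1,2)])
  then obtain z where z: "a < z" "z < b"
    "Sb N m b - Sb N m a = (b - a) * (- (real N * real ((N-1) choose (m-1)) * z ^ (m-1) * (1-z) ^ (N-m)))"
    by blast
  have p1: "0 < real N" using assms by simp
  have p2: "0 < real ((N-1) choose (m-1))" using assms by simp
  have p3: "0 < z ^ (m-1)" using z assms by simp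
  have p4: "0 < (1-z) ^ (N-m)" using z assms by simp
  have "0 < real N * real ((N-1) choose (m-1)) * z ^ (m-1) * (1-z) ^ (N-m)"
    using p1 p2 p3 p4 by (intro mult_pos_pos)
  then have "0 < (b - a) * (real N * real ((N-1) choose (m-1)) * z ^ (m-1) * (1-z) ^ (N-m))"
    using z by (intro mult_pos_pos[of "b-a"]) auto
  then show ?thesis using z(3) by linarith
qed

lemma Sb_cont: "continuous_on A (Sb N m)"
  unfolding Sb_def by (intro continuous_intros)

lemma Sb_0: "1 \<le> m \<Longrightarrow> Sb N m 0 = 1"
proof -
  assume "1 \<le> m"
  have "Sb N m 0 = (\<Sum>i<m. if i = 0 then 1 else 0)"
    unfolding Sb_def by (intro sum.cong) (auto simp: power_0_left)
  also have "\<dots> = 1" using \<open>1 \<le> m\<close> by (subst sum.delta) auto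
  finally show ?thesis .
qed

lemma Sb_1: "m \<le> N \<Longrightarrow> Sb N m 1 = 0"
  unfolding Sb_def by (intro sum.neutral) auto

locale wl =
  fixes l m :: nat
  assumes m1: "1 \<le> m" and ml: "m < l"
begin

lemma W_Sb: "Wfun l m = Sb (l-1) m"
  using Wfun_Sb[OF ml] by (simp add: fun_eq_iff)

lemma w_eq: "wfun l m x = 1 - Wfun l m x"
  by (simp add: Wfun_def)

lemma W_strict: "0 \<le> a \<Longrightarrow> a < b \<Longrightarrow> b \<le> 1 \<Longrightarrow> Wfun l m b < Wfun l m a"
  unfolding W_Sb using m1 ml by (intro Sb_strict) auto

lemma W_mono: "0 \<le> a \<Longrightarrow> a \<le> b \<Longrightarrow> b \<le> 1 \<Longrightarrow> Wfun l m b \<le> Wfun l m a"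
  using W_strict[of a b] by (cases "a = b") auto

lemma W_0[simp]: "Wfun l m 0 = 1"
  unfolding W_Sb using m1 by (rule Sb_0)

lemma W_1[simp]: "Wfun l m 1 = 0"
  unfolding W_Sb using ml by (intro Sb_1) auto

lemma W_cont: "continuous_on A (Wfun l m)"
  unfolding W_Sb by (rule Sb_cont)

lemma w_cont: "continuous_on A (wfun l m)"
proof -
  have "wfun l m = (\<lambda>x. 1 - Wfun l m x)" by (simp add: fun_eq_iff w_eq)
  then show ?thesis using W_cont by (auto intro!: continuous_intros)
qed

lemma W_pos: "0 \<le> x \<Longrightarrow> x < 1 \<Longrightarrow> 0 < Wfun l m x"
  using W_strict[of x 1] by simp

lemma W_le1: "0 \<le> x \<Longrightarrow> x \<le> 1 \<Longrightarrow> Wfun l m x \<le> 1"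
  using W_mono[of 0 x] by simp

lemma W_nonneg: "0 \<le> x \<Longrightarrow> x \<le> 1 \<Longrightarrow> 0 \<le> Wfun l m x"
  using W_mono[of x 1] by simp

lemma w_strict: "0 \<le> a \<Longrightarrow> a < b \<Longrightarrow> b \<le> 1 \<Longrightarrow> wfun l m a < wfun l m b"
  using W_strict[of a b] by (simp add: w_eq)

lemma w_inj: "0 \<le> a \<Longrightarrow> a \<le> 1 \<Longrightarrow> 0 \<le> b \<Longrightarrow> b \<le> 1 \<Longrightarrow> wfun l m a = wfun l m b \<Longrightarrow> a = b"
  using w_strict[of a b] w_strict[of b a] by (cases a b rule: linorder_cases) auto

lemma w_0[simp]: "wfun l m 0 = 0" by (simp add: w_eq)
lemma w_1[simp]: "wfun l m 1 = 1" by (simp add: w_eq)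

lemma winv:
  assumes "0 \<le> y" "y \<le> 1"
  shows "0 \<le> winv l m y \<and> winv l m y \<le> 1 \<and> wfun l m (winv l m y) = y"
proof -
  obtain x where x: "x \<in> {0..1}" "wfun l m x = y"
    using IVT'[of "wfun l m" 0 y 1] assms w_cont by auto
  have "winv l m y = x" unfolding winv_def
    by (rule the_equality) (use x w_inj in auto)
  then show ?thesis using x by auto
qed

lemma winv_w: "0 \<le> x \<Longrightarrow> x \<le> 1 \<Longrightarrow> winv l m (wfun l m x) = x"
  unfolding winv_def by (rule the_equality) (use w_inj in auto)

lemma w_range: "0 \<le> x \<Longrightarrow> x \<le> 1 \<Longrightarrow> 0 \<le> wfun l m x \<and> wfun l m x \<le> 1"
  using W_le1[of x] W_nonneg[of x] by (simp add: w_eq)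

lemma winv_mono:
  assumes "0 \<le> y1" "y1 \<le> y2" "y2 \<le> 1"
  shows "winv l m y1 \<le> winv l m y2"
proof (rule ccontr)
  assume "\<not> ?thesis"
  then have "wfun l m (winv l m y2) < wfun l m (winv l m y1)"
    using winv[of y1] winv[of y2] assms by (intro w_strict) auto
  then show False using winv[of y1] winv[of y2] assms by auto
qed

lemma w_image: "wfun l m ` {0..1} = {0..1}"
proof
  show "wfun l m ` {0..1} \<subseteq> {0..1}" using w_range by auto
  show "{0..1} \<subseteq> wfun l m ` {0..1}"
  proof
    fix y :: real assume "y \<in> {0..1}"
    then show "y \<in> wfun l m ` {0..1}"
      using winv[of y] by (intro image_eqI[of _ _ "winv l m y"]) auto
  qed
qed

lemma winv_cont: "continuous_on {0..1} (winv l m)"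
proof -
  have "continuous_on (wfun l m ` {0..1}) (winv l m)"
    by (rule continuous_on_inv) (use w_cont winv_w in auto)
  then show ?thesis by (simp add: w_image)
qed

end


locale game = wl l m for l m +
  fixes c v :: real and f g :: "nat \<Rightarrow> real \<Rightarrow> real" and n :: nat
  assumes g_cont: "\<forall>j\<in>{1..n}. continuous_on UNIV (g j)"
    and g_mono: "\<forall>j\<in>{1..n}. strict_mono (g j)"
    and g_surj: "\<forall>j\<in>{1..n}. surj (g j)"
    and f_inv: "\<forall>j\<in>{1..n}. f j = inv (g j)"
    and g_order: "\<forall>i\<in>{1..n}. \<forall>j\<in>{1..n}. \<forall>p. j < i \<longrightarrow> g i p < g j p"
    and ratio: "\<forall>i\<in>{1..n}. \<forall>j\<in>{1..n}. \<forall>x y. i < j \<and> g i c < y \<and> y < x \<longrightarrow>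
                  (f i y - c) / (f j y - c) < (f i x - c) / (f j x - c)"
    and f1v: "f 1 v > c"
begin

lemma f_g: "j \<in> {1..n} \<Longrightarrow> f j (g j y) = y"
  using f_inv g_mono by (simp add: inv_f_f strict_mono_imp_inj_on)

lemma g_f: "j \<in> {1..n} \<Longrightarrow> g j (f j x) = x"
  using f_inv g_surj by (simp add: surj_f_inv_f)

lemma f_le_iff: "j \<in> {1..n} \<Longrightarrow> f j x \<le> f j y \<longleftrightarrow> x \<le> y"
  using g_mono g_f[of j x] g_f[of j y] by (metis strict_mono_less_eq)

lemma f_less_iff: "j \<in> {1..n} \<Longrightarrow> f j x < f j y \<longleftrightarrow> x < y"
  using f_le_iff[of j y x] by auto

lemma f_cont: "j \<in> {1..n} \<Longrightarrow> isCont (f j) x"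
proof -
  assume j: "j \<in> {1..n}"
  have "isCont (f j) (g j (f j x))"
    by (rule isCont_inverse_function2[of "f j x - 1" _ "f j x + 1"])
       (use j f_g g_cont in \<open>auto simp: continuous_on_eq_continuous_at\<close>)
  then show ?thesis using g_f[OF j] by simp
qed

lemma f_order: "i \<in> {1..n} \<Longrightarrow> j \<in> {1..n} \<Longrightarrow> i < j \<Longrightarrow> f i x < f j x"
proof -
  assume ij: "i \<in> {1..n}" "j \<in> {1..n}" "i < j"
  have "g j (f i x) < g i (f i x)" using g_order ij by auto
  then have "g j (f i x) < x" using g_f ij by simp
  then have "f j (g j (f i x)) < f j x" using f_less_iff ij by blast
  then show ?thesis using f_g ij by simp
qed

lemma f_order_le: "i \<in> {1..n} \<Longrightarrow> j \<in> {1..n} \<Longrightarrow> i \<le> j \<Longrightarrow> f i x \<le> f j x"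
  using f_order[of i j x] by (cases "i = j") auto

lemma g_less_iff_f: "j \<in> {1..n} \<Longrightarrow> g j c < y \<longleftrightarrow> c < f j y"
  using f_less_iff[of j "g j c" y] f_g by simp

end

locale chain = game +
  fixes alpha :: "nat \<Rightarrow> real"
  assumes alpha_nn: "\<forall>k\<in>{1..n}. 0 \<le> alpha k"
    and alpha_sum: "(\<Sum>k=1..n. alpha k) < 1"
begin

abbreviation "Gm j \<equiv> Gam n alpha j"
abbreviation "U j \<equiv> Upen l m c v f g n alpha j"
abbreviation "L j \<equiv> Lpen l m c v f g n alpha j"
abbreviation "p j \<equiv> ppr l m c v f g n alpha j"
abbreviation "W x \<equiv> Wfun l m x"

lemma Gm_nn: "1 \<le> j \<Longrightarrow> 0 \<le> Gm j"
  unfolding Gam_def using alpha_nn by (intro sum_nonneg) auto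

lemma Gm_le: "1 \<le> j \<Longrightarrow> Gm j \<le> (\<Sum>k=1..n. alpha k)"
  unfolding Gam_def using alpha_nn by (intro sum_mono2) auto

lemma Gm_lt1: "1 \<le> j \<Longrightarrow> Gm j < 1"
  using Gm_le alpha_sum by fastforce

lemma Gm_Suc: "j \<in> {1..n} \<Longrightarrow> Gm j = alpha j + Gm (Suc j)"
  unfolding Gam_def by (simp add: sum.atLeast_Suc_atMost)

lemma Gm_last: "Gm (Suc n) = 0"
  unfolding Gam_def by simp

lemma Gm_mono: "1 \<le> j \<Longrightarrow> j \<le> k \<Longrightarrow> Gm k \<le> Gm j"
  unfolding Gam_def using alpha_nn by (intro sum_mono2) auto

lemma WG_pos: "1 \<le> j \<Longrightarrow> 0 < W (Gm j)"
  using Gm_nn Gm_lt1 W_pos by auto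

lemma WG_le1: "1 \<le> j \<Longrightarrow> W (Gm j) \<le> 1"
  using Gm_nn Gm_lt1 W_le1 by (simp add: less_imp_le)

lemma WG_mono: "j \<in> {1..n} \<Longrightarrow> W (Gm j) \<le> W (Gm (Suc j))"
  using Gm_nn[of "Suc j"] Gm_lt1[of j] alpha_nn Gm_Suc[of j] by (intro W_mono) auto

lemma p_def': "p j = c + (f j (U j) - c) * W (Gm j)"
  by (simp add: ppr_def pr_of_def)

lemma L_def': "L j = g j ((p j - c) / W (Gm (Suc j)) + c)"
  by (simp add: Lpen_def low_of_def ppr_def)

lemma U_Suc: "1 \<le> j \<Longrightarrow> U (Suc j) = L j"
  by (cases j) (auto simp: Lpen_def)

lemma U_1: "U 1 = v" by simp

lemma fL: "j \<in> {1..n} \<Longrightarrow> f j (L j) = (p j - c) / W (Gm (Suc j)) + c"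
  using L_def' f_g by simp

lemma basic0: "1 \<le> j \<Longrightarrow> j \<le> n \<Longrightarrow> c < f j (U j) \<and> U j \<le> v"
proof (induction j rule: nat_induct_at_least)
  case base
  then show ?case using f1v by simp
next
  case (Suc j)
  then have j: "j \<in> {1..n}" and IH: "c < f j (U j)" "U j \<le> v" by auto
  have "0 < p j - c" using IH WG_pos[of j] j by (simp add: p_def')
  then have "c < f j (L j)" using fL[OF j] WG_pos[of "Suc j"] by simp
  also have "f j (L j) < f (Suc j) (L j)" using f_order Suc by simp
  finally have 1: "c < f (Suc j) (U (Suc j))" using U_Suc j by simp
  have "f j (L j) - c \<le> f j (U j) - c"
  proof -
    have "f j (L j) - c = (f j (U j) - c) * W (Gm j) / W (Gm (Suc j))"
      using fL[OF j] by (simp add: p_def')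
    also have "\<dots> \<le> (f j (U j) - c) * W (Gm (Suc j)) / W (Gm (Suc j))"
      using IH WG_mono[OF j] WG_pos[of "Suc j"]
      by (intro divide_right_mono mult_left_mono) auto
    also have "\<dots> = f j (U j) - c" using WG_pos[of "Suc j"] by simp
    finally show ?thesis .
  qed
  then have "L j \<le> U j" using f_le_iff[OF j] by simp
  then show ?case using 1 IH U_Suc j by simp
qed

lemma basic: "j \<in> {1..n} \<Longrightarrow> c < f j (U j) \<and> U j \<le> v"
  using basic0 by auto

lemma p_gt: "j \<in> {1..n} \<Longrightarrow> c < p j"
  using basic[of j] WG_pos[of j] by (simp add: p_def')

lemma fL_gt: "j \<in> {1..n} \<Longrightarrow> c < f j (L j)"
  using fL[of j] p_gt[of j] WG_pos[of "Suc j"] by simp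

lemma L_le_U: "j \<in> {1..n} \<Longrightarrow> L j \<le> U j"
  using basic[of "Suc j"] basic[of j] U_Suc[of j]
proof -
  assume j: "j \<in> {1..n}"
  have "f j (L j) - c = (f j (U j) - c) * W (Gm j) / W (Gm (Suc j))"
    using fL[OF j] by (simp add: p_def')
  also have "\<dots> \<le> (f j (U j) - c) * W (Gm (Suc j)) / W (Gm (Suc j))"
    using basic[OF j] WG_mono[OF j] WG_pos[of "Suc j"]
    by (intro divide_right_mono mult_left_mono) auto
  also have "\<dots> = f j (U j) - c" using WG_pos[of "Suc j"] by simp
  finally show ?thesis using f_le_iff[OF j] by simp
qed

lemma L_lt_U: "j \<in> {1..n} \<Longrightarrow> 0 < alpha j \<Longrightarrow> L j < U j"
proof -
  assume j: "j \<in> {1..n}" and a: "0 < alpha j"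
  have "W (Gm j) < W (Gm (Suc j))"
    using Gm_nn[of "Suc j"] Gm_lt1[of j] a Gm_Suc[OF j] j by (intro W_strict) auto
  have "f j (L j) - c = (f j (U j) - c) * W (Gm j) / W (Gm (Suc j))"
    using fL[OF j] by (simp add: p_def')
  also have "\<dots> < (f j (U j) - c) * W (Gm (Suc j)) / W (Gm (Suc j))"
    using basic[OF j] \<open>W (Gm j) < W (Gm (Suc j))\<close> WG_pos[of "Suc j"] j
    by (intro divide_strict_right_mono mult_strict_left_mono) auto
  also have "\<dots> = f j (U j) - c" using WG_pos[of "Suc j"] by simp
  finally show ?thesis using f_less_iff[OF j] by simp
qed

lemma U_mono0: "j \<le> k \<Longrightarrow> 1 \<le> j \<Longrightarrow> k \<le> n \<Longrightarrow> U k \<le> U j"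
proof (induction k rule: dec_induct)
  case base then show ?case by simp
next
  case (step k)
  then show ?case using L_le_U[of k] U_Suc[of k] by simp
qed

lemma U_mono: "1 \<le> j \<Longrightarrow> j \<le> k \<Longrightarrow> k \<le> n \<Longrightarrow> U k \<le> U j"
  using U_mono0 by auto

lemma L_ge_U: "1 \<le> j \<Longrightarrow> j < k \<Longrightarrow> k \<le> n \<Longrightarrow> U k \<le> L j"
  using U_mono[of "Suc j" k] U_Suc[of j] by simp


lemma WGS_eq: "j \<in> {1..n} \<Longrightarrow> W (Gm (Suc j)) = (p j - c) / (f j (L j) - c)"
proof -
  assume j: "j \<in> {1..n}"
  have e: "f j (L j) - c = (p j - c) / W (Gm (Suc j))" using fL[OF j] by simp
  have "W (Gm (Suc j)) * (f j (L j) - c) = p j - c"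
    unfolding e using WG_pos[of "Suc j"] j by simp
  then show ?thesis using fL_gt[OF j] by (simp add: eq_divide_eq)
qed

lemma pS_eq: "j \<in> {1..n} \<Longrightarrow> p j - c = (f j (U j) - c) * W (Gm j)"
  by (simp add: p_def')

lemma R1:
  assumes i: "i \<in> {1..n}" and ik: "i \<le> k" and kn: "k \<le> n"
  shows "\<forall>y. L k \<le> y \<and> y \<le> U k \<longrightarrow> (f i y - c) / (f k y - c) * (p k - c) \<le> p i - c"
  using ik kn
proof (induction k rule: dec_induct)
  case base
  show ?case
  proof (intro allI impI)
    fix y assume y: "L i \<le> y \<and> y \<le> U i"
    have "c < f i y" using fL_gt[OF i] f_le_iff[OF i, of "L i" y] y by simp
    then show "(f i y - c) / (f i y - c) * (p i - c) \<le> p i - c" by simp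
  qed
next
  case (step k)
  then have k: "k \<in> {1..n}" and k1: "Suc k \<in> {1..n}" using i by auto
  have IH: "\<And>y. L k \<le> y \<Longrightarrow> y \<le> U k \<Longrightarrow> (f i y - c) / (f k y - c) * (p k - c) \<le> p i - c"
    using step by auto
  show ?case
  proof (intro allI impI)
    fix y assume y: "L (Suc k) \<le> y \<and> y \<le> U (Suc k)"
    define u where "u = U (Suc k)"
    have uL: "u = L k" unfolding u_def using U_Suc k by simp
    have cy: "c < f (Suc k) y" using fL_gt[OF k1] f_le_iff[OF k1, of "L (Suc k)" y] y by simp
    have cu: "c < f (Suc k) u" using basic[OF k1] u_def by simp
    have pk1: "0 < p (Suc k) - c" using p_gt[OF k1] by simp
    show "(f i y - c) / (f (Suc k) y - c) * (p (Suc k) - c) \<le> p i - c"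
    proof (cases "f i y \<le> c")
      case True
      then have "(f i y - c) / (f (Suc k) y - c) * (p (Suc k) - c) \<le> 0"
        using cy pk1 by (intro mult_nonpos_nonneg divide_nonpos_pos) auto
      then show ?thesis using p_gt[OF i] by simp
    next
      case False
      then have gy: "g i c < y" using g_less_iff_f[OF i] by simp
      have ik1: "i < Suc k" using step by simp
      have rat: "(f i y - c) / (f (Suc k) y - c) \<le> (f i u - c) / (f (Suc k) u - c)"
      proof (cases "y < u")
        case True
        then show ?thesis using ratio i k1 ik1 gy by (meson less_imp_le)
      next
        case False
        then have "y = u" using y u_def by simp
        then show ?thesis by simp
      qed
      have "(f i y - c) / (f (Suc k) y - c) * (p (Suc k) - c)
          \<le> (f i u - c) / (f (Suc k) u - c) * (p (Suc k) - c)"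
        using rat pk1 by (intro mult_right_mono) auto
      also have "\<dots> = (f i u - c) * W (Gm (Suc k))"
      proof -
        have pe: "p (Suc k) - c = (f (Suc k) u - c) * W (Gm (Suc k))"
          using pS_eq[OF k1] u_def by simp
        show ?thesis unfolding pe using cu by simp
      qed
      also have "\<dots> = (f i (L k) - c) / (f k (L k) - c) * (p k - c)"
        using WGS_eq[OF k] uL by simp
      also have "\<dots> \<le> p i - c"
        using IH L_le_U[OF k] by simp
      finally show ?thesis .
    qed
  qed
qed

lemma R2:
  assumes i: "i \<in> {1..n}" and ki: "k \<le> i" and k1: "1 \<le> k"
  shows "\<forall>y. L k \<le> y \<and> y \<le> U k \<longrightarrow> (f i y - c) / (f k y - c) * (p k - c) \<le> p i - c"
  using ki k1
proof (induction k rule: inc_induct)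
  case base
  show ?case
  proof (intro allI impI)
    fix y assume y: "L i \<le> y \<and> y \<le> U i"
    have "c < f i y" using fL_gt[OF i] f_le_iff[OF i, of "L i" y] y by simp
    then show "(f i y - c) / (f i y - c) * (p i - c) \<le> p i - c" by simp
  qed
next
  case (step k)
  then have k: "k \<in> {1..n}" and k1: "Suc k \<in> {1..n}" using i by auto
  have IH: "\<And>y. L (Suc k) \<le> y \<Longrightarrow> y \<le> U (Suc k) \<Longrightarrow> (f i y - c) / (f (Suc k) y - c) * (p (Suc k) - c) \<le> p i - c"
    using step by auto
  show ?case
  proof (intro allI impI)
    fix y assume y: "L k \<le> y \<and> y \<le> U k"
    have cL: "c < f k (L k)" using fL_gt[OF k] .
    have cy: "c < f k y" using cL f_le_iff[OF k, of "L k" y] y by simp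
    have ord: "\<And>z. f k z < f i z" using f_order k i step by simp
    have pk: "0 < p k - c" using p_gt[OF k] by simp
    have gL: "g k c < L k" using g_less_iff_f[OF k] cL by simp
    have rat: "(f i y - c) / (f k y - c) \<le> (f i (L k) - c) / (f k (L k) - c)"
    proof (cases "L k < y")
      case True
      then have "(f k (L k) - c) / (f i (L k) - c) < (f k y - c) / (f i y - c)"
        using ratio k i step gL by blast
      moreover have "0 < f i (L k) - c" "0 < f i y - c" using ord[of "L k"] ord[of y] cL cy by auto
      ultimately show ?thesis using cL cy by (simp add: field_simps)
    next
      case False
      then have "y = L k" using y by simp
      then show ?thesis by simp
    qed
    have "(f i y - c) / (f k y - c) * (p k - c) \<le> (f i (L k) - c) / (f k (L k) - c) * (p k - c)"
      using rat pk by (intro mult_right_mono) auto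
    also have "\<dots> = (f i (L k) - c) * W (Gm (Suc k))"
      using WGS_eq[OF k] by simp
    also have "\<dots> = (f i (U (Suc k)) - c) / (f (Suc k) (U (Suc k)) - c) * (p (Suc k) - c)"
    proof -
      have pe: "p (Suc k) - c = (f (Suc k) (U (Suc k)) - c) * W (Gm (Suc k))"
        using pS_eq[OF k1] by simp
      have "U (Suc k) = L k" using U_Suc k by simp
      then show ?thesis unfolding pe using basic[OF k1] by simp
    qed
    also have "\<dots> \<le> p i - c"
      using IH L_le_U[OF k1] by simp
    finally show "(f i y - c) / (f k y - c) * (p k - c) \<le> p i - c" .
  qed
qed

lemma Rall:
  assumes "i \<in> {1..n}" "k \<in> {1..n}" "L k \<le> y" "y \<le> U k"
  shows "(f i y - c) / (f k y - c) * (p k - c) \<le> p i - c"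
  using R1[of i k] R2[of i k] assms by (cases "i \<le> k") auto

lemma cover0: "1 \<le> j \<Longrightarrow> j \<le> n \<Longrightarrow> L j \<le> x \<Longrightarrow> x \<le> v \<Longrightarrow> \<exists>k\<in>{1..j}. L k \<le> x \<and> x \<le> U k"
proof (induction j rule: nat_induct_at_least)
  case base
  then show ?case by auto
next
  case (Suc j)
  show ?case
  proof (cases "x \<le> U (Suc j)")
    case True then show ?thesis using Suc by auto
  next
    case False
    then have "L j \<le> x" using U_Suc[of j] Suc by simp
    then show ?thesis using Suc by force
  qed
qed

lemma cover: "1 \<le> n \<Longrightarrow> x \<le> v \<Longrightarrow> x < L n \<or> (\<exists>k\<in>{1..n}. L k \<le> x \<and> x \<le> U k)"
  using cover0[of n x] by force

end


context chain begin

abbreviation "ph j x \<equiv> phi l m c v f g n alpha j x"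
definition rr :: "nat \<Rightarrow> real \<Rightarrow> real" where "rr j x = (f j x - p j) / (f j x - c)"
definition Fc :: "real \<Rightarrow> real" where "Fc x = (\<Sum>k=1..n. alpha k * ph k x)"

lemma ph_unfold: "ph j x = (if x < L j then 0 else if x \<le> U j then
    (winv l m (rr j x) - Gm (Suc j)) / alpha j else 1)"
  by (simp add: phi_def rr_def)

lemma Gm_range: "1 \<le> j \<Longrightarrow> 0 \<le> Gm j \<and> Gm j \<le> 1"
  using Gm_nn Gm_lt1 by (simp add: less_imp_le)

lemma rr_eq: "j \<in> {1..n} \<Longrightarrow> c < f j x \<Longrightarrow> rr j x = 1 - (p j - c) / (f j x - c)"
  unfolding rr_def by (simp add: field_simps)

lemma rr_L: "j \<in> {1..n} \<Longrightarrow> rr j (L j) = wfun l m (Gm (Suc j))"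
  using rr_eq[of j "L j"] fL_gt[of j] WGS_eq[of j] by (simp add: w_eq)

lemma rr_U: "j \<in> {1..n} \<Longrightarrow> rr j (U j) = wfun l m (Gm j)"
proof -
  assume j: "j \<in> {1..n}"
  have "(p j - c) / (f j (U j) - c) = W (Gm j)"
    using pS_eq[OF j] basic[OF j] by simp
  then show ?thesis using rr_eq[OF j, of "U j"] basic[OF j] by (simp add: w_eq)
qed

lemma fx_gt: "j \<in> {1..n} \<Longrightarrow> L j \<le> x \<Longrightarrow> c < f j x"
  using fL_gt[of j] f_le_iff[of j "L j" x] by simp

lemma rr_mono: "j \<in> {1..n} \<Longrightarrow> L j \<le> x \<Longrightarrow> x \<le> y \<Longrightarrow> rr j x \<le> rr j y"
proof -
  assume j: "j \<in> {1..n}" and x: "L j \<le> x" and xy: "x \<le> y"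
  have cx: "c < f j x" using fx_gt[OF j x] .
  have "f j x \<le> f j y" using f_le_iff[OF j] xy by simp
  then have "(p j - c) / (f j y - c) \<le> (p j - c) / (f j x - c)"
    using cx p_gt[OF j] by (intro divide_left_mono) auto
  then show ?thesis using rr_eq[OF j] cx \<open>f j x \<le> f j y\<close> by simp
qed

lemma rr_range: "j \<in> {1..n} \<Longrightarrow> L j \<le> x \<Longrightarrow> x \<le> U j \<Longrightarrow>
    wfun l m (Gm (Suc j)) \<le> rr j x \<and> rr j x \<le> wfun l m (Gm j)"
  using rr_mono[of j "L j" x] rr_mono[of j x "U j"] rr_L[of j] rr_U[of j] by simp

lemma rr_01: "j \<in> {1..n} \<Longrightarrow> L j \<le> x \<Longrightarrow> x \<le> U j \<Longrightarrow> 0 \<le> rr j x \<and> rr j x \<le> 1"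
  using rr_range[of j x] w_range[of "Gm (Suc j)"] w_range[of "Gm j"] Gm_range[of j] Gm_range[of "Suc j"]
  by fastforce

lemma L_eq_U: "j \<in> {1..n} \<Longrightarrow> alpha j = 0 \<Longrightarrow> L j = U j"
proof -
  assume j: "j \<in> {1..n}" and a: "alpha j = 0"
  have "Gm j = Gm (Suc j)" using Gm_Suc[OF j] a by simp
  then have "rr j (L j) = rr j (U j)" using rr_L[OF j] rr_U[OF j] by simp
  then have "(p j - c) / (f j (L j) - c) = (p j - c) / (f j (U j) - c)"
    using rr_eq[OF j] fL_gt[OF j] basic[OF j] by simp
  then have "f j (L j) = f j (U j)" using p_gt[OF j] fL_gt[OF j] basic[OF j] by (simp add: field_simps)
  then show ?thesis using f_le_iff[OF j, of "L j" "U j"] f_le_iff[OF j, of "U j" "L j"] by simp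
qed

lemma winv_L: "j \<in> {1..n} \<Longrightarrow> winv l m (rr j (L j)) = Gm (Suc j)"
  using rr_L[of j] winv_w[of "Gm (Suc j)"] Gm_range[of "Suc j"] by simp

lemma winv_U: "j \<in> {1..n} \<Longrightarrow> winv l m (rr j (U j)) = Gm j"
  using rr_U[of j] winv_w[of "Gm j"] Gm_range[of j] by simp

lemma aphi_low: "j \<in> {1..n} \<Longrightarrow> x \<le> L j \<Longrightarrow> alpha j * ph j x = 0"
  using winv_L[of j] L_le_U[of j] by (auto simp: ph_unfold)

lemma aphi_high: "j \<in> {1..n} \<Longrightarrow> U j \<le> x \<Longrightarrow> alpha j * ph j x = alpha j"
proof -
  assume j: "j \<in> {1..n}" and x: "U j \<le> x"
  show ?thesis
  proof (cases "alpha j = 0")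
    case True then show ?thesis by simp
  next
    case False
    then have "L j < U j" using L_lt_U[OF j] alpha_nn j by (simp add: less_le)
    show ?thesis
    proof (cases "x = U j")
      case True
      then show ?thesis using \<open>L j < U j\<close> winv_U[OF j] Gm_Suc[OF j] False by (simp add: ph_unfold)
    next
      case False
      then show ?thesis using x \<open>L j < U j\<close> by (simp add: ph_unfold)
    qed
  qed
qed

lemma aphi_mid: "j \<in> {1..n} \<Longrightarrow> L j \<le> x \<Longrightarrow> x \<le> U j \<Longrightarrow> alpha j * ph j x = winv l m (rr j x) - Gm (Suc j)"
proof -
  assume j: "j \<in> {1..n}" and x: "L j \<le> x" "x \<le> U j"
  show ?thesis
  proof (cases "alpha j = 0")
    case True
    then have "x = L j" using L_eq_U[OF j] x by simp
    then show ?thesis using True winv_L[OF j] by simp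
  next
    case False
    then show ?thesis using x by (simp add: ph_unfold)
  qed
qed

lemma Fc_mid:
  assumes j: "j \<in> {1..n}" and x: "L j \<le> x" "x \<le> U j"
  shows "Fc x = winv l m (rr j x)"
proof -
  have split: "{1..n} = {1..<j} \<union> ({j} \<union> {Suc j..n})" using j by auto
  have s1: "(\<Sum>k\<in>{1..<j}. alpha k * ph k x) = 0"
  proof (intro sum.neutral ballI)
    fix k assume k: "k \<in> {1..<j}"
    have "U j \<le> L k" using L_ge_U[of k j] k j by simp
    then show "alpha k * ph k x = 0" using aphi_low[of k x] k j x by simp
  qed
  have s3: "(\<Sum>k\<in>{Suc j..n}. alpha k * ph k x) = Gm (Suc j)"
  proof -
    have "(\<Sum>k\<in>{Suc j..n}. alpha k * ph k x) = (\<Sum>k\<in>{Suc j..n}. alpha k)"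
    proof (intro sum.cong refl)
      fix k assume k: "k \<in> {Suc j..n}"
      have "U k \<le> L j" using L_ge_U[of j k] k j by simp
      then show "alpha k * ph k x = alpha k" using aphi_high[of k x] k j x by simp
    qed
    then show ?thesis by (simp add: Gam_def)
  qed
  have "Fc x = (\<Sum>k\<in>{1..<j}. alpha k * ph k x) + (alpha j * ph j x + (\<Sum>k\<in>{Suc j..n}. alpha k * ph k x))"
    unfolding Fc_def split by (subst sum.union_disjoint, auto)+
  then show ?thesis using s1 s3 aphi_mid[OF j x] by simp
qed

lemma Fc_low: "1 \<le> n \<Longrightarrow> x < L n \<Longrightarrow> Fc x = 0"
  unfolding Fc_def
proof (intro sum.neutral ballI)
  fix k assume n: "1 \<le> n" and x: "x < L n" and k: "k \<in> {1..n}"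
  have "L n \<le> L k"
  proof (cases "k = n")
    case False
    then have "U n \<le> L k" using L_ge_U[of k n] k by simp
    then show ?thesis using L_le_U[of n] n by simp
  qed simp
  then show "alpha k * ph k x = 0" using aphi_low[OF k, of x] x by simp
qed

lemma Fc_range: "j \<in> {1..n} \<Longrightarrow> L j \<le> x \<Longrightarrow> x \<le> U j \<Longrightarrow> 0 \<le> Fc x \<and> Fc x \<le> 1"
  using Fc_mid[of j x] winv[of "rr j x"] rr_01[of j x] by simp

lemma pay_eq:
  assumes j: "j \<in> {1..n}" and x: "L j \<le> x" "x \<le> U j"
  shows "(f j x - c) * W (Fc x) = p j - c"
proof -
  have "W (Fc x) = 1 - rr j x"
    using Fc_mid[OF j x] winv[of "rr j x"] rr_01[OF j x] by (simp add: w_eq)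
  also have "\<dots> = (p j - c) / (f j x - c)" using rr_eq[OF j] fx_gt[OF j x(1)] by simp
  finally show ?thesis using fx_gt[OF j x(1)] by simp
qed

lemma Fc_range_all: "1 \<le> n \<Longrightarrow> x \<le> v \<Longrightarrow> 0 \<le> Fc x \<and> Fc x \<le> 1"
  using cover[of x] Fc_low[of x] Fc_range by force

lemma dev_bound:
  assumes i: "i \<in> {1..n}" and x: "x \<le> v"
  shows "(f i x - c) * W (Fc x) \<le> p i - c"
proof -
  have n: "1 \<le> n" using i by simp
  show ?thesis
  proof (cases "x < L n")
    case True
    have nn: "n \<in> {1..n}" using n by simp
    have "f i x - c \<le> f i (L n) - c" using True f_le_iff[OF i, of x "L n"] by simp
    also have "\<dots> = (f i (L n) - c) / (f n (L n) - c) * (p n - c)"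
      using WGS_eq[OF nn] Gm_last fL_gt[OF nn] by (simp add: field_simps)
    also have "\<dots> \<le> p i - c" using Rall[OF i nn, of "L n"] L_le_U[OF nn] by simp
    finally show ?thesis using Fc_low[OF n True] by simp
  next
    case False
    then obtain k where k: "k \<in> {1..n}" "L k \<le> x" "x \<le> U k" using cover[OF n x] by auto
    have "W (Fc x) = (p k - c) / (f k x - c)"
      using pay_eq[OF k] fx_gt[OF k(1,2)] by (simp add: field_simps)
    then have "(f i x - c) * W (Fc x) = (f i x - c) / (f k x - c) * (p k - c)" by simp
    also have "\<dots> \<le> p i - c" using Rall[OF i k] .
    finally show ?thesis .
  qed
qed

end


definition FF :: "nat \<Rightarrow> nat \<Rightarrow> real \<Rightarrow> real \<Rightarrow> (nat \<Rightarrow> real \<Rightarrow> real) \<Rightarrow> (nat \<Rightarrow> real \<Rightarrow> real)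
    \<Rightarrow> nat \<Rightarrow> (nat \<Rightarrow> real) \<Rightarrow> real \<Rightarrow> real" where
  "FF l m c v f g n alpha x = (\<Sum>k=1..n. alpha k * phi l m c v f g n alpha k x)"

context chain begin

lemma Fc_FF: "Fc = FF l m c v f g n alpha"
  by (simp add: fun_eq_iff Fc_def FF_def)

definition hh :: "nat \<Rightarrow> real \<Rightarrow> real" where
  "hh j y = (winv l m (rr j y) - Gm (Suc j)) / alpha j"

lemma ph_clamp:
  assumes j: "j \<in> {1..n}" and a: "0 < alpha j"
  shows "ph j x = hh j (max (L j) (min (U j) x))"
proof -
  have LU: "L j < U j" using L_lt_U[OF j a] .
  consider "x < L j" | "L j \<le> x" "x \<le> U j" | "U j < x" by linarith
  then show ?thesis
  proof cases
    case 1
    then have "max (L j) (min (U j) x) = L j" using LU by simp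
    then show ?thesis using 1 winv_L[OF j] by (simp add: ph_unfold hh_def)
  next
    case 2
    then show ?thesis by (simp add: ph_unfold hh_def)
  next
    case 3
    then have "max (L j) (min (U j) x) = U j" using LU by simp
    then show ?thesis using 3 LU winv_U[OF j] Gm_Suc[OF j] a by (simp add: ph_unfold hh_def)
  qed
qed

lemma rr_cont: "j \<in> {1..n} \<Longrightarrow> continuous_on {L j..U j} (rr j)"
proof -
  assume j: "j \<in> {1..n}"
  have fc: "continuous_on {L j..U j} (f j)"
    using f_cont[OF j] by (intro continuous_at_imp_continuous_on) auto
  have nz: "\<forall>x\<in>{L j..U j}. f j x - c \<noteq> 0" using fx_gt[OF j] by fastforce
  have c1: "continuous_on {L j..U j} (\<lambda>x. f j x - p j)" by (intro continuous_intros fc)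
  have c2: "continuous_on {L j..U j} (\<lambda>x. f j x - c)" by (intro continuous_intros fc)
  have "continuous_on {L j..U j} (\<lambda>x. (f j x - p j) / (f j x - c))"
    by (rule continuous_on_divide[OF c1 c2 nz])
  then show ?thesis by (simp add: rr_def[abs_def])
qed

lemma hh_cont: "j \<in> {1..n} \<Longrightarrow> 0 < alpha j \<Longrightarrow> continuous_on {L j..U j} (hh j)"
proof -
  assume j: "j \<in> {1..n}" and a: "0 < alpha j"
  have "continuous_on {L j..U j} (\<lambda>y. winv l m (rr j y))"
    by (rule continuous_on_compose2[OF winv_cont rr_cont[OF j]]) (use rr_01[OF j] in auto)
  then show ?thesis unfolding hh_def[abs_def] using a by (intro continuous_intros) auto
qed

lemma ph_cont:
  assumes j: "j \<in> {1..n}" and a: "0 < alpha j"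
  shows "continuous_on UNIV (ph j)"
proof -
  have c1: "continuous_on UNIV (\<lambda>x. max (L j) (min (U j) x))"
    by (intro continuous_intros)
  have "continuous_on UNIV (\<lambda>x. hh j (max (L j) (min (U j) x)))"
    by (rule continuous_on_compose2[OF hh_cont[OF j a] c1]) (use L_le_U[OF j] in auto)
  then show ?thesis using ph_clamp[OF j a] by simp
qed

lemma ph_mono:
  assumes j: "j \<in> {1..n}" and a: "0 < alpha j" and xy: "x \<le> y"
  shows "ph j x \<le> ph j y"
proof -
  define x' where "x' = max (L j) (min (U j) x)"
  define y' where "y' = max (L j) (min (U j) y)"
  have LU: "L j \<le> U j" using L_le_U[OF j] .
  have x': "L j \<le> x'" "x' \<le> U j" "x' \<le> y'" and y': "L j \<le> y'" "y' \<le> U j"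
    using xy LU by (auto simp: x'_def y'_def)
  have "winv l m (rr j x') \<le> winv l m (rr j y')"
    using rr_01[OF j x'(1,2)] rr_01[OF j y'] rr_mono[OF j x'(1) x'(3)] by (intro winv_mono) auto
  then have "hh j x' \<le> hh j y'" unfolding hh_def using a by (intro divide_right_mono) auto
  then show ?thesis using ph_clamp[OF j a] x'_def y'_def by simp
qed

lemma ph_bot: "j \<in> {1..n} \<Longrightarrow> (ph j \<longlongrightarrow> 0) at_bot"
proof -
  assume j: "j \<in> {1..n}"
  have "eventually (\<lambda>x. ph j x = 0) at_bot"
    unfolding eventually_at_bot_linorder
    by (rule exI[of _ "L j - 1"]) (auto simp: ph_unfold)
  then show ?thesis by (rule tendsto_eventually)
qed

lemma ph_top: "j \<in> {1..n} \<Longrightarrow> (ph j \<longlongrightarrow> 1) at_top"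
proof -
  assume j: "j \<in> {1..n}"
  have "eventually (\<lambda>x. ph j x = 1) at_top"
    unfolding eventually_at_top_linorder
    by (rule exI[of _ "U j + 1"]) (use L_le_U[OF j] in \<open>auto simp: ph_unfold\<close>)
  then show ?thesis by (rule tendsto_eventually)
qed

lemma ph_rcont: "j \<in> {1..n} \<Longrightarrow> 0 < alpha j \<Longrightarrow> continuous (at_right a) (ph j)"
  using ph_cont[of j] by (simp add: continuous_on_eq_continuous_at continuous_at_imp_continuous_at_within)

end

context game begin

lemma compare:
  assumes A: "chain l m c v f g n a" and B: "chain l m c v f g n b"
    and MA: "0 < MA" and MB: "0 < MB"
    and jj: "1 \<le> j" "j \<le> n"
    and hyp: "\<forall>k\<in>{1..j}. MA * Wfun l m (Gam n a k) \<le> MB * Wfun l m (Gam n b k)"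
  shows "MA * (ppr l m c v f g n a j - c) \<le> MB * (ppr l m c v f g n b j - c) \<and>
     (\<forall>x. Lpen l m c v f g n b j \<le> x \<and> x \<le> v \<longrightarrow>
        MA * Wfun l m (FF l m c v f g n a x) \<le> MB * Wfun l m (FF l m c v f g n b x))"
  using jj hyp
proof (induction j rule: nat_induct_at_least)
  case base
  interpret A: chain l m c v f g n a by (rule A)
  interpret B: chain l m c v f g n b by (rule B)
  have n1: "1 \<in> {1..n}" using base by simp
  have h1: "MA * Wfun l m (Gam n a 1) \<le> MB * Wfun l m (Gam n b 1)" using base by simp
  have p1: "MA * (A.p 1 - c) \<le> MB * (B.p 1 - c)"
  proof -
    have "MA * (A.p 1 - c) = (f 1 v - c) * (MA * Wfun l m (Gam n a 1))" using A.pS_eq[OF n1] by simp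
    also have "\<dots> \<le> (f 1 v - c) * (MB * Wfun l m (Gam n b 1))"
      using h1 f1v by (intro mult_left_mono) auto
    also have "\<dots> = MB * (B.p 1 - c)" using B.pS_eq[OF n1] by simp
    finally show ?thesis .
  qed
  show ?case
  proof (intro conjI allI impI)
    show "MA * (A.p 1 - c) \<le> MB * (B.p 1 - c)" by (rule p1)
    fix x assume x: "B.L 1 \<le> x \<and> x \<le> v"
    have cx: "c < f 1 x" using B.fx_gt[OF n1] x by simp
    have "(f 1 x - c) * Wfun l m (B.Fc x) = B.p 1 - c" using B.pay_eq[OF n1] x by simp
    moreover have "(f 1 x - c) * Wfun l m (A.Fc x) \<le> A.p 1 - c" using A.dev_bound[OF n1] x by simp
    ultimately have "(f 1 x - c) * (MA * Wfun l m (A.Fc x)) \<le> (f 1 x - c) * (MB * Wfun l m (B.Fc x))"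
      using p1 MA MB by (smt (verit, ccfv_SIG) mult.left_commute mult_left_mono)
    then show "MA * Wfun l m (FF l m c v f g n a x) \<le> MB * Wfun l m (FF l m c v f g n b x)"
      using cx by (simp add: A.Fc_FF B.Fc_FF)
  qed
next
  case (Suc j)
  interpret A: chain l m c v f g n a by (rule A)
  interpret B: chain l m c v f g n b by (rule B)
  have j: "j \<in> {1..n}" and j1: "Suc j \<in> {1..n}" using Suc by auto
  have IH1: "MA * (A.p j - c) \<le> MB * (B.p j - c)"
   and IH2: "\<And>x. B.L j \<le> x \<Longrightarrow> x \<le> v \<Longrightarrow> MA * Wfun l m (A.Fc x) \<le> MB * Wfun l m (B.Fc x)"
    using Suc by (auto simp: A.Fc_FF B.Fc_FF)
  have hS: "MA * Wfun l m (Gam n a (Suc j)) \<le> MB * Wfun l m (Gam n b (Suc j))" using Suc by auto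
  define x0 where "x0 = A.U (Suc j)"
  define y where "y = B.L j"
  have yU: "y = B.U (Suc j)" using B.U_Suc[of j] j y_def by simp
  have cx0: "c < f (Suc j) x0" using A.basic[OF j1] x0_def by simp
  have x0v: "x0 \<le> v" using A.basic[OF j1] x0_def by simp
  have pA: "MA * (A.p (Suc j) - c) \<le> MB * (B.p (Suc j) - c)"
  proof (cases "x0 \<le> y")
    case True
    have "MA * (A.p (Suc j) - c) = (f (Suc j) x0 - c) * (MA * Wfun l m (Gam n a (Suc j)))"
      using A.pS_eq[OF j1] x0_def by simp
    also have "\<dots> \<le> (f (Suc j) x0 - c) * (MB * Wfun l m (Gam n b (Suc j)))"
      using hS cx0 by (intro mult_left_mono) auto
    also have "\<dots> \<le> (f (Suc j) y - c) * (MB * Wfun l m (Gam n b (Suc j)))"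
      using True f_le_iff[OF j1] MB B.WG_pos[of "Suc j"] by (intro mult_right_mono) auto
    also have "\<dots> = MB * (B.p (Suc j) - c)" using B.pS_eq[OF j1] yU by simp
    finally show ?thesis .
  next
    case False
    have "MA * (A.p (Suc j) - c) = (f (Suc j) x0 - c) * (MA * Wfun l m (A.Fc x0))"
      using A.pay_eq[OF j1, of x0] A.L_le_U[OF j1] x0_def by simp
    also have "\<dots> \<le> (f (Suc j) x0 - c) * (MB * Wfun l m (B.Fc x0))"
      using IH2[of x0] False x0v cx0 y_def by (intro mult_left_mono) auto
    also have "\<dots> = MB * ((f (Suc j) x0 - c) * Wfun l m (B.Fc x0))" by simp
    also have "\<dots> \<le> MB * (B.p (Suc j) - c)"
      using B.dev_bound[OF j1 x0v] MB by (intro mult_left_mono) auto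
    finally show ?thesis .
  qed
  show ?case
  proof (intro conjI allI impI)
    show "MA * (A.p (Suc j) - c) \<le> MB * (B.p (Suc j) - c)" by (rule pA)
    fix x assume x: "B.L (Suc j) \<le> x \<and> x \<le> v"
    show "MA * Wfun l m (FF l m c v f g n a x) \<le> MB * Wfun l m (FF l m c v f g n b x)"
    proof (cases "B.L j \<le> x")
      case True then show ?thesis using IH2[of x] x by (simp add: A.Fc_FF B.Fc_FF)
    next
      case False
      then have xU: "x \<le> B.U (Suc j)" using B.U_Suc[of j] j by simp
      have cx: "c < f (Suc j) x" using B.fx_gt[OF j1] x by simp
      have "(f (Suc j) x - c) * Wfun l m (B.Fc x) = B.p (Suc j) - c" using B.pay_eq[OF j1] x xU by simp
      moreover have "(f (Suc j) x - c) * Wfun l m (A.Fc x) \<le> A.p (Suc j) - c"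
        using A.dev_bound[OF j1] x by simp
      ultimately have "(f (Suc j) x - c) * (MA * Wfun l m (A.Fc x)) \<le> (f (Suc j) x - c) * (MB * Wfun l m (B.Fc x))"
        using pA MA MB by (smt (verit, ccfv_SIG) mult.left_commute mult_left_mono)
      then show ?thesis using cx by (simp add: A.Fc_FF B.Fc_FF)
    qed
  qed
qed

end


locale tfam = game +
  fixes d :: nat and M :: "nat \<Rightarrow> real" and q :: "nat \<Rightarrow> real" and t :: "nat \<Rightarrow> nat \<Rightarrow> real"
  assumes d1: "1 \<le> d"
    and M_pos: "\<forall>s\<in>{1..d}. 0 < M s"
    and M_mono: "\<forall>s\<in>{1..d}. \<forall>s'\<in>{1..d}. s \<le> s' \<longrightarrow> M s' \<le> M s"
    and q_pos: "\<forall>k\<in>{1..n}. 0 < q k"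
    and q_sum: "(\<Sum>k=1..n. q k) < 1"
    and tf: "\<forall>j\<in>{1..n}.
        (\<forall>s\<in>{1..d}. t s j \<ge> 0) \<and> (\<Sum>s=1..d. t s j) = 1 \<and>
        (\<exists>dj\<in>{1..d}.
           (\<forall>s\<in>{1..d}. s \<le> dj \<longrightarrow> t s j > 0) \<and>
           (\<forall>s\<in>{1..d}. dj < s \<longrightarrow> t s j = 0) \<and>
           (\<forall>s\<in>{1..dj}. M s * Wfun l m (\<Sum>k=j..n. t s k * q k)
                        = M 1 * Wfun l m (\<Sum>k=j..n. t 1 k * q k)) \<and>
           (\<forall>s. dj \<le> s \<and> s < d \<longrightarrow>
                M (Suc s) * Wfun l m (\<Sum>k=j..n. t (Suc s) k * q k)
                \<le> M s * Wfun l m (\<Sum>k=j..n. t s k * q k)))"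
begin

lemma Mpos: "s \<in> {1..d} \<Longrightarrow> 0 < M s"
  using M_pos by blast

lemma M1pos: "0 < M 1"
  using Mpos d1 by simp

definition al :: "nat \<Rightarrow> nat \<Rightarrow> real" where "al s k = q k * t s k"

lemma gam_al: "(\<Sum>k=j..n. t s k * q k) = Gam n (al s) j"
  by (simp add: Gam_def al_def mult.commute)

lemma tf_j: "j \<in> {1..n} \<Longrightarrow> (\<forall>s\<in>{1..d}. t s j \<ge> 0) \<and> (\<Sum>s=1..d. t s j) = 1 \<and>
        (\<exists>dj\<in>{1..d}.
           (\<forall>s\<in>{1..d}. s \<le> dj \<longrightarrow> t s j > 0) \<and>
           (\<forall>s\<in>{1..d}. dj < s \<longrightarrow> t s j = 0) \<and>
           (\<forall>s\<in>{1..dj}. M s * Wfun l m (Gam n (al s) j) = M 1 * Wfun l m (Gam n (al 1) j)) \<and>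
           (\<forall>s. dj \<le> s \<and> s < d \<longrightarrow>
                M (Suc s) * Wfun l m (Gam n (al (Suc s)) j) \<le> M s * Wfun l m (Gam n (al s) j)))"
proof -
  assume j: "j \<in> {1..n}"
  from bspec[OF tf j, unfolded gam_al] show ?thesis .
qed

lemma t_nn: "j \<in> {1..n} \<Longrightarrow> s \<in> {1..d} \<Longrightarrow> 0 \<le> t s j"
  using tf_j by blast

lemma t_le1: "j \<in> {1..n} \<Longrightarrow> s \<in> {1..d} \<Longrightarrow> t s j \<le> 1"
proof -
  assume j: "j \<in> {1..n}" and s: "s \<in> {1..d}"
  have "t s j \<le> (\<Sum>s'=1..d. t s' j)"
    using s t_nn[OF j] by (intro member_le_sum) auto
  then show ?thesis using tf_j[OF j] by simp
qed

lemma t1_pos: "j \<in> {1..n} \<Longrightarrow> 0 < t 1 j"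
proof -
  assume j: "j \<in> {1..n}"
  obtain dj where "dj \<in> {1..d}" "\<forall>s\<in>{1..d}. s \<le> dj \<longrightarrow> t s j > 0"
    using tf_j[OF j, THEN conjunct2, THEN conjunct2] by (elim bexE conjE) (rule that, assumption+)
  then show ?thesis using d1 by auto
qed

lemma chain_s: "s \<in> {1..d} \<Longrightarrow> chain l m c v f g n (al s)"
proof -
  assume s: "s \<in> {1..d}"
  show ?thesis
  proof unfold_locales
    show "\<forall>k\<in>{1..n}. 0 \<le> al s k" using q_pos t_nn s by (simp add: al_def less_imp_le)
    have "(\<Sum>k=1..n. al s k) \<le> (\<Sum>k=1..n. q k)"
      unfolding al_def using q_pos t_le1 s
      by (intro sum_mono) (simp add: mult_left_le less_imp_le)
    then show "(\<Sum>k=1..n. al s k) < 1" using q_sum by simp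
  qed
qed

abbreviation "WW s j \<equiv> M s * Wfun l m (Gam n (al s) j)"

lemma E2: "j \<in> {1..n} \<Longrightarrow> s \<in> {1..d} \<Longrightarrow> WW s j \<le> WW 1 j"
proof -
  assume j: "j \<in> {1..n}" and s: "s \<in> {1..d}"
  from tf_j[OF j, THEN conjunct2, THEN conjunct2]
  obtain dj where dj1: "dj \<in> {1..d}"
    and dj2: "\<forall>s\<in>{1..dj}. WW s j = WW 1 j"
    and dj3: "\<forall>s. dj \<le> s \<and> s < d \<longrightarrow> WW (Suc s) j \<le> WW s j"
    by (elim bexE conjE) (rule that, assumption+)
  have main0: "dj + k \<le> d \<Longrightarrow> WW (dj + k) j \<le> WW 1 j" for k
  proof (induction k)
    case 0
    have "dj \<in> {1..dj}" using dj1 by simp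
    from bspec[OF dj2 this] show ?case by simp
  next
    case (Suc k)
    then have lt: "dj + k < d" by simp
    then have "WW (Suc (dj + k)) j \<le> WW (dj + k) j" using dj3 by simp
    then show ?case using Suc.IH lt by simp
  qed
  have main: "WW s' j \<le> WW 1 j" if h1: "dj \<le> s'" and h2: "s' \<le> d" for s'
  proof -
    obtain k where "s' = dj + k" using le_Suc_ex[OF h1] by (elim exE)
    then show ?thesis using main0[of k] h2 by simp
  qed
  show ?thesis
  proof (cases "s \<le> dj")
    case True
    then have "s \<in> {1..dj}" using s by simp
    from bspec[OF dj2 this] show ?thesis by simp
  next
    case False then show ?thesis using main[of s] s by simp
  qed
qed

lemma E_eq: "j \<in> {1..n} \<Longrightarrow> s \<in> {1..d} \<Longrightarrow> 0 < t s j \<Longrightarrow> WW s j = WW 1 j"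
proof -
  assume j: "j \<in> {1..n}" and s: "s \<in> {1..d}" and ts: "0 < t s j"
  obtain dj where dj: "dj \<in> {1..d}"
    "\<forall>s\<in>{1..d}. dj < s \<longrightarrow> t s j = 0"
    "\<forall>s\<in>{1..dj}. WW s j = WW 1 j"
    using tf_j[OF j, THEN conjunct2, THEN conjunct2] by (elim bexE conjE) (rule that, assumption+)
  have "s \<le> dj"
  proof (rule ccontr)
    assume "\<not> s \<le> dj"
    then have "t s j = 0" using dj(2) s by auto
    then show False using ts by simp
  qed
  then have "s \<in> {1..dj}" using s by simp
  from bspec[OF dj(3) this] show ?thesis .
qed

lemma nest: "k \<in> {1..n} \<Longrightarrow> Suc k \<le> n \<Longrightarrow> s \<in> {1..d} \<Longrightarrow> 0 < t s (Suc k) \<Longrightarrow> 0 < t s k"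
proof (rule ccontr)
  assume k: "k \<in> {1..n}" "Suc k \<le> n" and s: "s \<in> {1..d}" and ts: "0 < t s (Suc k)"
    and nt: "\<not> 0 < t s k"
  have k1: "Suc k \<in> {1..n}" using k by auto
  have t0: "t s k = 0" using nt t_nn[OF k(1) s] by simp
  have "Gam n (al s) k = Gam n (al s) (Suc k)"
    using t0 k(1) by (simp add: Gam_def al_def sum.atLeast_Suc_atMost)
  then have "WW 1 (Suc k) \<le> WW 1 k" using E_eq[OF k1 s ts] E2[OF k(1) s] by simp
  then have le: "Wfun l m (Gam n (al 1) (Suc k)) \<le> Wfun l m (Gam n (al 1) k)"
    using M_pos d1 by simp
  interpret C1: chain l m c v f g n "al 1" using chain_s d1 by simp
  have "Gam n (al 1) k = al 1 k + Gam n (al 1) (Suc k)" using C1.Gm_Suc[OF k(1)] .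
  moreover have "0 < al 1 k" using q_pos t1_pos k by (simp add: al_def)
  ultimately have "Wfun l m (Gam n (al 1) k) < Wfun l m (Gam n (al 1) (Suc k))"
    using C1.Gm_nn[of "Suc k"] C1.Gm_lt1[of k] k by (intro W_strict) auto
  then show False using le by simp
qed

lemma E3: "j \<in> {1..n} \<Longrightarrow> s \<in> {1..d} \<Longrightarrow> 0 < t s j \<Longrightarrow> k \<in> {1..j} \<Longrightarrow> WW s k = WW 1 k"
proof -
  assume j: "j \<in> {1..n}" and s: "s \<in> {1..d}" and ts: "0 < t s j" and k: "k \<in> {1..j}"
  have "\<forall>k. k \<le> j \<longrightarrow> 1 \<le> k \<longrightarrow> 0 < t s k"
  proof (intro allI impI)
    fix k assume "k \<le> j" "1 \<le> k"
    then show "0 < t s k"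
    proof (induction k rule: inc_induct)
      case base then show ?case using ts by simp
    next
      case (step k) then show ?case using nest[of k s] j s by auto
    qed
  qed
  then have "0 < t s k" using k by auto
  then show ?thesis using E_eq[of k s] k j s by auto
qed

lemma Kequal:
  assumes j: "j \<in> {1..n}" and s: "s \<in> {1..d}" and ts: "0 < t s j"
  shows "M s * (ppr l m c v f g n (al s) j - c) = M 1 * (ppr l m c v f g n (al 1) j - c)"
proof -
  have A: "chain l m c v f g n (al s)" and B: "chain l m c v f g n (al 1)" using chain_s s d1 by auto
  have "M s * (ppr l m c v f g n (al s) j - c) \<le> M 1 * (ppr l m c v f g n (al 1) j - c)"
    using compare[OF A B, of "M s" "M 1" j] M_pos s d1 j E3[OF j s ts] by auto
  moreover have "M 1 * (ppr l m c v f g n (al 1) j - c) \<le> M s * (ppr l m c v f g n (al s) j - c)"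
    using compare[OF B A, of "M 1" "M s" j] M_pos s d1 j E3[OF j s ts] by auto
  ultimately show ?thesis by simp
qed

lemma Hcomp:
  assumes s: "s \<in> {1..d}" and n: "1 \<le> n" and x: "x \<le> v"
  shows "M s * Wfun l m (FF l m c v f g n (al s) x) \<le> M 1 * Wfun l m (FF l m c v f g n (al 1) x)"
proof -
  have A: "chain l m c v f g n (al s)" and B: "chain l m c v f g n (al 1)" using chain_s s d1 by auto
  interpret A: chain l m c v f g n "al s" by (rule A)
  interpret B: chain l m c v f g n "al 1" by (rule B)
  show ?thesis
  proof (cases "B.L n \<le> x")
    case True
    then show ?thesis using compare[OF A B, of "M s" "M 1" n] M_pos s d1 n x E2 by auto
  next
    case False
    then have "FF l m c v f g n (al 1) x = 0" using B.Fc_low[OF n] B.Fc_FF by simp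
    moreover have w1: "Wfun l m (FF l m c v f g n (al s) x) \<le> 1"
      using A.Fc_range_all[OF n x] A.Fc_FF W_le1 by simp
    moreover have "M s \<le> M 1" using M_mono s d1 by auto
    moreover have "M s * Wfun l m (FF l m c v f g n (al s) x) \<le> M s * 1"
      using w1 Mpos[OF s] by (intro mult_left_mono) auto
    ultimately show ?thesis by simp
  qed
qed

definition KK :: "nat \<Rightarrow> real" where "KK j = M 1 * (ppr l m c v f g n (al 1) j - c)"

lemma KK_pos: "j \<in> {1..n} \<Longrightarrow> 0 < KK j"
proof -
  assume j: "j \<in> {1..n}"
  interpret B: chain l m c v f g n "al 1" using chain_s d1 by simp
  show ?thesis unfolding KK_def using B.p_gt[OF j] M_pos d1 by simp
qed

lemma node_bound:
  assumes s: "s \<in> {1..d}" and j: "j \<in> {1..n}" and x: "x \<le> v" and cx: "c \<le> f j x"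
  shows "M s * ((f j x - c) * Wfun l m (FF l m c v f g n (al s) x)) \<le> KK j"
proof -
  interpret B: chain l m c v f g n "al 1" using chain_s d1 by simp
  have n: "1 \<le> n" using j by simp
  have "M s * ((f j x - c) * Wfun l m (FF l m c v f g n (al s) x))
      = (f j x - c) * (M s * Wfun l m (FF l m c v f g n (al s) x))" by simp
  also have "\<dots> \<le> (f j x - c) * (M 1 * Wfun l m (FF l m c v f g n (al 1) x))"
    using Hcomp[OF s n x] cx by (intro mult_left_mono) auto
  also have "\<dots> = M 1 * ((f j x - c) * Wfun l m (B.Fc x))" by (simp only: B.Fc_FF mult_ac)
  also have "\<dots> \<le> KK j" unfolding KK_def
    using B.dev_bound[OF j x] M1pos by (intro mult_left_mono) auto
  finally show ?thesis .
qed

end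


lemma binom_prob:
  fixes N :: "'a measure" and K :: "'i set" and B :: "'a set"
  assumes N: "prob_space N" and K: "finite K" and B: "B \<in> sets N"
  shows "measure (PiM K (\<lambda>_. N)) {ys \<in> space (PiM K (\<lambda>_. N)). card {k\<in>K. ys k \<in> B} < m}
       = Sb (card K) m (measure N B)"
proof -
  interpret N: prob_space N by (rule N)
  interpret P: finite_product_prob_space "\<lambda>_. N" K
    by unfold_locales (simp_all add: K)
  define p where "p = measure N B"
  define E where "E J = PiE K (\<lambda>k. if k \<in> J then B else space N - B)" for J
  define S where "S = {J. J \<subseteq> K \<and> card J < m}"
  have Bsp: "B \<subseteq> space N" using B by (rule sets.sets_into_space)
  have ev: "{ys \<in> space (PiM K (\<lambda>_. N)). card {k\<in>K. ys k \<in> B} < m} = (\<Union>J\<in>S. E J)"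
  proof (intro equalityI subsetI)
    fix ys assume ys: "ys \<in> {ys \<in> space (PiM K (\<lambda>_. N)). card {k\<in>K. ys k \<in> B} < m}"
    then have sp: "ys \<in> PiE K (\<lambda>_. space N)" and c: "card {k\<in>K. ys k \<in> B} < m"
      by (auto simp: space_PiM)
    have "ys \<in> E {k\<in>K. ys k \<in> B}" using sp by (auto simp: E_def PiE_iff)
    moreover have "{k\<in>K. ys k \<in> B} \<in> S" using c by (auto simp: S_def)
    ultimately show "ys \<in> (\<Union>J\<in>S. E J)" by blast
  next
    fix ys assume "ys \<in> (\<Union>J\<in>S. E J)"
    then obtain J where J: "J \<in> S" "ys \<in> E J" by blast
    have yk: "\<And>k. k \<in> K \<Longrightarrow> ys k \<in> (if k \<in> J then B else space N - B)"
      using J(2) by (auto simp: E_def PiE_iff)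
    have JK: "J \<subseteq> K" using J(1) by (auto simp: S_def)
    have "{k\<in>K. ys k \<in> B} = J"
    proof (intro set_eqI iffI)
      fix k assume "k \<in> {k\<in>K. ys k \<in> B}"
      then show "k \<in> J" using yk[of k] by (auto split: if_splits)
    next
      fix k assume "k \<in> J"
      then show "k \<in> {k\<in>K. ys k \<in> B}" using yk[of k] JK by auto
    qed
    moreover have "ys \<in> PiE K (\<lambda>_. space N)"
    proof -
      have "ys k \<in> space N" if k: "k \<in> K" for k
        using yk[OF k] Bsp by (auto split: if_splits)
      then show ?thesis using J(2) by (auto simp: E_def PiE_iff)
    qed
    ultimately show "ys \<in> {ys \<in> space (PiM K (\<lambda>_. N)). card {k\<in>K. ys k \<in> B} < m}"
      using J by (auto simp: space_PiM S_def)
  qed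
  have disj: "disjoint_family_on E S"
    unfolding disjoint_family_on_def
  proof (intro ballI impI)
    fix J J' assume J: "J \<in> S" "J' \<in> S" "J \<noteq> J'"
    then obtain k where k: "k \<in> K" "(k \<in> J) \<noteq> (k \<in> J')" using J by (auto simp: S_def)
    show "E J \<inter> E J' = {}"
    proof (rule ccontr)
      assume "E J \<inter> E J' \<noteq> {}"
      then obtain ys where "ys \<in> E J" "ys \<in> E J'" by blast
      then show False using k by (auto simp: E_def PiE_iff split: if_splits)
    qed
  qed
  have Esets: "E J \<in> sets (PiM K (\<lambda>_. N))" for J
    unfolding E_def using B by (intro sets_PiM_I_finite K) auto
  have finS: "finite S"
  proof (rule finite_subset)
    show "S \<subseteq> Pow K" by (auto simp: S_def)
    show "finite (Pow K)" using K by simp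
  qed
  have mE: "measure (PiM K (\<lambda>_. N)) (E J) = p ^ card J * (1 - p) ^ (card K - card J)" if J: "J \<subseteq> K" for J
  proof -
    have "emeasure (PiM K (\<lambda>_. N)) (E J) = (\<Prod>k\<in>K. emeasure N (if k \<in> J then B else space N - B))"
      unfolding E_def using B by (intro P.measure_times) auto
    also have "\<dots> = (\<Prod>k\<in>K. ennreal (if k \<in> J then p else 1 - p))"
      using B by (intro prod.cong refl) (auto simp: N.emeasure_eq_measure p_def N.prob_compl)
    also have "\<dots> = ennreal (\<Prod>k\<in>K. (if k \<in> J then p else 1 - p))"
      by (rule prod_ennreal) (auto simp: p_def N.prob_le_1)
    moreover have nn: "0 \<le> (\<Prod>k\<in>K. (if k \<in> J then p else 1 - p))"
      by (intro prod_nonneg) (auto simp: p_def N.prob_le_1)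
    ultimately have "measure (PiM K (\<lambda>_. N)) (E J) = (\<Prod>k\<in>K. (if k \<in> J then p else 1 - p))"
      by (simp add: measure_def)
    also have "\<dots> = p ^ card (K \<inter> J) * (1 - p) ^ card (K \<inter> - J)"
      by (subst prod.If_cases[OF K]) (simp add: Int_def)
    also have "K \<inter> J = J" using J by auto
    also have "card (K \<inter> - J) = card K - card J"
      using J K by (metis Diff_eq card_Diff_subset finite_subset)
    finally show ?thesis .
  qed
  have "measure (PiM K (\<lambda>_. N)) (\<Union>J\<in>S. E J) = (\<Sum>J\<in>S. measure (PiM K (\<lambda>_. N)) (E J))"
    using finS Esets disj by (intro P.finite_measure_finite_Union) auto
  also have "\<dots> = (\<Sum>J\<in>S. p ^ card J * (1 - p) ^ (card K - card J))"
    using mE by (intro sum.cong refl) (auto simp: S_def)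
  also have "\<dots> = (\<Sum>i<m. \<Sum>J\<in>{J. J \<in> S \<and> card J = i}. p ^ card J * (1 - p) ^ (card K - card J))"
    by (rule sum.group[symmetric]) (use finS in \<open>auto simp: S_def\<close>)
  also have "\<dots> = (\<Sum>i<m. real (card K choose i) * p ^ i * (1 - p) ^ (card K - i))"
  proof (intro sum.cong refl)
    fix i assume i: "i \<in> {..<m}"
    have eq: "{J. J \<in> S \<and> card J = i} = {J. J \<subseteq> K \<and> card J = i}" using i by (auto simp: S_def)
    have "(\<Sum>J\<in>{J. J \<in> S \<and> card J = i}. p ^ card J * (1 - p) ^ (card K - card J))
        = (\<Sum>J\<in>{J. J \<subseteq> K \<and> card J = i}. p ^ i * (1 - p) ^ (card K - i))"
      unfolding eq by (intro sum.cong refl) auto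
    also have "\<dots> = real (card {J. J \<subseteq> K \<and> card J = i}) * (p ^ i * (1 - p) ^ (card K - i))"
      by simp
    also have "card {J. J \<subseteq> K \<and> card J = i} = card K choose i" by (rule n_subsets[OF K])
    finally show "(\<Sum>J\<in>{J. J \<in> S \<and> card J = i}. p ^ card J * (1 - p) ^ (card K - card J))
        = real (card K choose i) * p ^ i * (1 - p) ^ (card K - i)" by simp
  qed
  finally show ?thesis unfolding ev p_def Sb_def .
qed

lemma bind_pmf_cong_support:
  fixes P :: "'a pmf" and F G :: "'a \<Rightarrow> 'b measure"
  assumes eq: "\<And>s. s \<in> set_pmf P \<Longrightarrow> F s = G s"
    and sF: "\<And>s. sets (F s) = sets R" and sG: "\<And>s. sets (G s) = sets R"
  shows "measure_pmf P \<bind> F = measure_pmf P \<bind> G"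
proof -
  have sp: "space (measure_pmf P) \<noteq> {}" by simp
  define x0 where "x0 = (SOME x. x \<in> space (measure_pmf P))"
  have sa: "subprob_algebra (F x0) = subprob_algebra (G x0)"
    using sF sG by (intro subprob_algebra_cong) simp
  have em: "(\<lambda>A. emeasure (measure_pmf P) (F -` A \<inter> space (measure_pmf P)))
      = (\<lambda>A. emeasure (measure_pmf P) (G -` A \<inter> space (measure_pmf P)))"
  proof
    fix A
    have "emeasure (measure_pmf P) (F -` A \<inter> space (measure_pmf P))
        = emeasure (measure_pmf P) ((F -` A) \<inter> set_pmf P)"
      by (simp add: emeasure_Int_set_pmf)
    also have "(F -` A) \<inter> set_pmf P = (G -` A) \<inter> set_pmf P" using eq by auto
    also have "emeasure (measure_pmf P) ((G -` A) \<inter> set_pmf P)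
        = emeasure (measure_pmf P) (G -` A \<inter> space (measure_pmf P))"
      by (simp add: emeasure_Int_set_pmf)
    finally show "emeasure (measure_pmf P) (F -` A \<inter> space (measure_pmf P))
        = emeasure (measure_pmf P) (G -` A \<inter> space (measure_pmf P))" .
  qed
  have "distr (measure_pmf P) (subprob_algebra (F x0)) F = distr (measure_pmf P) (subprob_algebra (G x0)) G"
    unfolding sa distr_def em ..
  then show ?thesis by (simp add: bind_nonempty sp x0_def)
qed

definition kfix :: "'a pmf \<Rightarrow> ('a \<Rightarrow> 'b measure) \<Rightarrow> 'a \<Rightarrow> 'b measure" where
  "kfix P F s = (if s \<in> set_pmf P then F s else F (SOME x. x \<in> set_pmf P))"

lemma kfix_eq: "measure_pmf P \<bind> F = measure_pmf P \<bind> kfix P F"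
  if "\<And>s. sets (F s) = sets R"
  by (rule bind_pmf_cong_support[where R=R]) (auto simp: kfix_def that)

lemma kfix_meas:
  assumes "\<And>s. s \<in> set_pmf P \<Longrightarrow> F s \<in> space (subprob_algebra R)"
  shows "kfix P F \<in> measurable (measure_pmf P) (subprob_algebra R)"
proof -
  have "kfix P F s \<in> space (subprob_algebra R)" for s
    using assms set_pmf_not_empty[of P] some_in_eq[of "set_pmf P"]
    by (auto simp: kfix_def)
  then show ?thesis by (simp add: measurable_def)
qed

lemma emeasure_bind_pmf:
  assumes k: "\<And>s. s \<in> set_pmf P \<Longrightarrow> F s \<in> space (subprob_algebra R)"
    and sF: "\<And>s. sets (F s) = sets R" and X: "X \<in> sets R"
  shows "emeasure (measure_pmf P \<bind> F) X = (\<integral>\<^sup>+s. emeasure (F s) X \<partial>measure_pmf P)"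
proof -
  have "emeasure (measure_pmf P \<bind> F) X = emeasure (measure_pmf P \<bind> kfix P F) X"
    using kfix_eq[of F R P] sF by simp
  also have "\<dots> = (\<integral>\<^sup>+s. emeasure (kfix P F s) X \<partial>measure_pmf P)"
    by (rule emeasure_bind[OF _ kfix_meas[OF k] X]) simp
  also have "\<dots> = (\<integral>\<^sup>+s. emeasure (F s) X \<partial>measure_pmf P)"
    by (intro nn_integral_cong_AE) (auto simp: AE_measure_pmf_iff kfix_def)
  finally show ?thesis .
qed

lemma sets_bind_pmf:
  assumes "\<And>s. sets (F s) = sets R"
  shows "sets (measure_pmf P \<bind> F) = sets R"
  using assms by (intro sets_bind) auto

lemma prob_space_bind_pmf:
  assumes k: "\<And>s. s \<in> set_pmf P \<Longrightarrow> prob_space (F s)"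
    and sF: "\<And>s. sets (F s) = sets R"
  shows "prob_space (measure_pmf P \<bind> F)"
proof -
  have k': "\<And>s. s \<in> set_pmf P \<Longrightarrow> F s \<in> space (subprob_algebra R)"
    using k sF by (auto simp: space_subprob_algebra prob_space_imp_subprob_space)
  have "prob_space (measure_pmf P \<bind> kfix P F)"
  proof (rule prob_space.prob_space_bind[OF _ _ kfix_meas[OF k']])
    show "prob_space (measure_pmf P)" by (rule prob_space_measure_pmf)
    show "AE x in measure_pmf P. prob_space (kfix P F x)"
      using k by (auto simp: AE_measure_pmf_iff kfix_def)
  qed
  then show ?thesis using kfix_eq[of F R P] sF by simp
qed

lemma AE_bind_pmf:
  assumes k: "\<And>s. s \<in> set_pmf P \<Longrightarrow> F s \<in> space (subprob_algebra R)"
    and sF: "\<And>s. sets (F s) = sets R"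
    and Q: "Measurable.pred R Q"
    and ae: "\<And>s. s \<in> set_pmf P \<Longrightarrow> AE x in F s. Q x"
  shows "AE x in measure_pmf P \<bind> F. Q x"
proof -
  have ae': "AE x in kfix P F y. Q x" if y: "y \<in> set_pmf P" for y
  proof -
    have e: "kfix P F y = F y" using y by (simp add: kfix_def)
    show ?thesis unfolding e by (rule ae[OF y])
  qed
  have r: "AE x in measure_pmf P \<bind> kfix P F. Q x"
    by (subst AE_bind[OF kfix_meas[OF k] Q]) (use ae' in \<open>auto simp: AE_measure_pmf_iff\<close>)
  have eqb: "measure_pmf P \<bind> F = measure_pmf P \<bind> kfix P F" by (rule kfix_eq[of F R]) (rule sF)
  show ?thesis unfolding eqb by (rule r)
qed


locale eqg = tfam l m c v f g n d "\<lambda>s. real (card (I s))" "pmf Q" t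
  for l m :: nat and c v :: real and f g :: "nat \<Rightarrow> real \<Rightarrow> real" and n d :: nat
    and I :: "nat \<Rightarrow> 'v::finite set" and Q :: "nat pmf" and t :: "nat \<Rightarrow> nat \<Rightarrow> real" +
  fixes E :: "'v \<Rightarrow> 'v \<Rightarrow> bool"
  assumes Gmv: "mean_valid E d I" and Qsupp: "set_pmf Q \<subseteq> {..n}"
begin

abbreviation "strat \<equiv> eq_strategy l m c v f g n Q d I t"
definition tau :: "nat \<Rightarrow> nat pmf" where "tau j = embed_pmf (\<lambda>s. if s \<in> {1..d} then t s j else 0)"
abbreviation "Pen s j \<equiv> pen_law l m c v f g n Q t (I s) s j"
abbreviation "phs s j \<equiv> phi l m c v f g n (al s) j"

lemma al_eq: "(\<lambda>k. pmf Q k * t s k) = al s"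
  by (simp add: fun_eq_iff al_def)

lemma Pen_def': "Pen s j = (\<Pi>\<^sub>M u\<in>UNIV. if u \<in> I s then interval_measure (phs s j) else return borel 0)"
  unfolding pen_law_def al_eq ..

lemma tau_nn_int: "j \<in> {1..n} \<Longrightarrow>
   (\<integral>\<^sup>+s. ennreal (if s \<in> {1..d} then t s j else 0) \<partial>count_space UNIV) = 1"
proof -
  assume j: "j \<in> {1..n}"
  have "(\<integral>\<^sup>+s. ennreal (if s \<in> {1..d} then t s j else 0) \<partial>count_space UNIV)
      = (\<Sum>s\<in>{1..d}. ennreal (if s \<in> {1..d} then t s j else 0))"
    by (rule nn_integral_count_space') auto
  also have "\<dots> = (\<Sum>s\<in>{1..d}. ennreal (t s j))" by (intro sum.cong) auto
  also have "\<dots> = ennreal (\<Sum>s\<in>{1..d}. t s j)"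
    using t_nn[OF j] by (intro sum_ennreal) auto
  also have "(\<Sum>s\<in>{1..d}. t s j) = 1" using tf_j[OF j, THEN conjunct2, THEN conjunct1] by simp
  finally show ?thesis by simp
qed

lemma pmf_tau: "j \<in> {1..n} \<Longrightarrow> pmf (tau j) s = (if s \<in> {1..d} then t s j else 0)"
  unfolding tau_def by (rule pmf_embed_pmf) (use t_nn tau_nn_int in auto)

lemma set_tau: "j \<in> {1..n} \<Longrightarrow> s \<in> set_pmf (tau j) \<Longrightarrow> s \<in> {1..d} \<and> 0 < t s j"
proof -
  assume j: "j \<in> {1..n}" and s: "s \<in> set_pmf (tau j)"
  then have "pmf (tau j) s \<noteq> 0" by (simp add: set_pmf_eq)
  then show ?thesis using pmf_tau[OF j, of s] t_nn[OF j, of s] by (auto split: if_splits)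
qed

lemma chainS: "s \<in> {1..d} \<Longrightarrow> chain l m c v f g n (al s)" by (rule chain_s)

lemma al_pos: "j \<in> {1..n} \<Longrightarrow> s \<in> {1..d} \<Longrightarrow> 0 < t s j \<Longrightarrow> 0 < al s j"
  using q_pos by (simp add: al_def)

lemma phs_props:
  assumes j: "j \<in> {1..n}" and s: "s \<in> {1..d}" and ts: "0 < t s j"
  shows "real_distribution (interval_measure (phs s j))"
    and "\<And>x. emeasure (interval_measure (phs s j)) {..x} = phs s j x"
    and "\<And>x. measure (interval_measure (phs s j)) {..x} = phs s j x"
proof -
  interpret C: chain l m c v f g n "al s" by (rule chainS[OF s])
  have a: "0 < al s j" using al_pos[OF j s ts] .
  have mono: "\<And>x y. x \<le> y \<Longrightarrow> phs s j x \<le> phs s j y" using C.ph_mono[OF j a] by simp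
  have rc: "\<And>x. continuous (at_right x) (phs s j)" using C.ph_rcont[OF j a] by simp
  have bot: "(phs s j \<longlongrightarrow> 0) at_bot" using C.ph_bot[OF j] .
  have top: "(phs s j \<longlongrightarrow> 1) at_top" using C.ph_top[OF j] .
  show "real_distribution (interval_measure (phs s j))"
    by (rule real_distribution_interval_measure[OF mono rc bot top])
  show "\<And>x. emeasure (interval_measure (phs s j)) {..x} = phs s j x"
    by (rule emeasure_interval_measure_Iic[OF mono rc bot])
  show "\<And>x. measure (interval_measure (phs s j)) {..x} = phs s j x"
    by (rule measure_interval_measure_Iic[OF mono rc bot])
qed

lemma Pen_comp_prob:
  assumes j: "j \<in> {1..n}" and s: "s \<in> {1..d}" and ts: "0 < t s j"
  shows "prob_space (if u \<in> I s then interval_measure (phs s j) else return borel (0::real))"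
  using phs_props(1)[OF j s ts] by (auto simp: real_distribution_def prob_space_return)

lemma Pen_prob:
  assumes j: "j \<in> {1..n}" and s: "s \<in> {1..d}" and ts: "0 < t s j"
  shows "prob_space (Pen s j)"
  unfolding Pen_def' by (rule prob_space_PiM) (rule Pen_comp_prob[OF j s ts])

lemma sets_Pen: "sets (Pen s j) = sets (\<Pi>\<^sub>M u\<in>(UNIV::'v set). (borel :: real measure))"
  unfolding Pen_def' by (rule sets_PiM_cong) auto

lemma space_actM: "space (actM :: 'v action measure) = UNIV"
  by (simp add: actM_def space_pair_measure space_PiM)

lemma meas_Pair_I: "(\<lambda>x. (I s, x)) \<in> measurable (Pen s j) actM"
proof -
  have "(\<lambda>x. (I s, x)) \<in> measurable (\<Pi>\<^sub>M u\<in>(UNIV::'v set). (borel :: real measure)) actM"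
    unfolding actM_def by measurable
  then show ?thesis using sets_Pen by (simp cong: measurable_cong_sets)
qed

abbreviation "Dk s j \<equiv> distr (Pen s j) actM (\<lambda>x. (I s, x))"

lemma Dk_sets: "sets (Dk s j) = sets actM" by simp

lemma Dk_prob: "j \<in> {1..n} \<Longrightarrow> s \<in> {1..d} \<Longrightarrow> 0 < t s j \<Longrightarrow> prob_space (Dk s j)"
proof -
  assume j: "j \<in> {1..n}" and s: "s \<in> {1..d}" and ts: "0 < t s j"
  show ?thesis by (rule prob_space.prob_space_distr[OF Pen_prob[OF j s ts] meas_Pair_I])
qed

lemma strat_def': "strat j = measure_pmf (tau j) \<bind> (\<lambda>s. Dk s j)"
  unfolding eq_strategy_def tau_def ..

lemma strat_sets: "sets (strat j) = sets actM"
  unfolding strat_def' by (rule sets_bind_pmf) simp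

lemma strat_prob: "j \<in> {1..n} \<Longrightarrow> prob_space (strat j)"
proof -
  assume j: "j \<in> {1..n}"
  show ?thesis unfolding strat_def'
  proof (rule prob_space_bind_pmf[where R=actM])
    fix s assume "s \<in> set_pmf (tau j)"
    from set_tau[OF j this] have st: "s \<in> {1..d}" "0 < t s j" by auto
    then show "prob_space (Dk s j)" by (intro Dk_prob[OF j st(1) st(2)])
  qed simp
qed

definition Nopp :: "'v action measure" where "Nopp = act_law Q strat"

definition K0 :: "nat \<Rightarrow> 'v action measure" where
  "K0 s = (if s = 0 then return actM no_offer else strat s)"

lemma K0_sets: "sets (K0 s) = sets actM"
  by (simp add: K0_def strat_sets)

lemma Nopp_def': "Nopp = measure_pmf Q \<bind> K0"
  unfolding Nopp_def act_law_def K0_def ..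

lemma Nopp_sets: "sets Nopp = sets actM"
  unfolding Nopp_def' by (rule sets_bind_pmf) (rule K0_sets)

lemma K0_prob: "s \<in> set_pmf Q \<Longrightarrow> prob_space (K0 s)"
proof -
  assume s: "s \<in> set_pmf Q"
  show ?thesis
  proof (cases "s = 0")
    case True then show ?thesis by (simp add: K0_def prob_space_return space_actM)
  next
    case False
    then have "s \<in> {1..n}" using s Qsupp by auto
    then show ?thesis using False strat_prob by (simp add: K0_def)
  qed
qed

lemma Nopp_prob: "prob_space Nopp"
  unfolding Nopp_def' by (rule prob_space_bind_pmf[where R=actM]) (use K0_prob K0_sets in auto)

definition Ev :: "'v \<Rightarrow> real \<Rightarrow> 'v action set" where
  "Ev u x = {a. u \<in> fst a \<and> snd a u \<le> v \<and> snd a u \<le> x}"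
definition Evl :: "'v \<Rightarrow> real \<Rightarrow> 'v action set" where
  "Evl u x = {a. u \<in> fst a \<and> snd a u \<le> v \<and> snd a u < x}"

lemma Ev_sets: "Ev u x \<in> sets actM"
proof -
  have "Measurable.pred actM (\<lambda>a. u \<in> fst a \<and> snd a u \<le> v \<and> snd a u \<le> x)"
    unfolding actM_def by measurable
  then show ?thesis by (simp add: pred_def Ev_def space_actM)
qed

lemma Evl_sets: "Evl u x \<in> sets actM"
proof -
  have "Measurable.pred actM (\<lambda>a. u \<in> fst a \<and> snd a u \<le> v \<and> snd a u < x)"
    unfolding actM_def by measurable
  then show ?thesis by (simp add: pred_def Evl_def space_actM)
qed

lemma Dk_Ev:
  assumes j: "j \<in> {1..n}" and s: "s \<in> {1..d}" and ts: "0 < t s j"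
  shows "emeasure (Dk s j) (Ev u x) = (if u \<in> I s then ennreal (phs s j (min v x)) else 0)"
proof -
  have "emeasure (Dk s j) (Ev u x) = emeasure (Pen s j) ((\<lambda>y. (I s, y)) -` Ev u x \<inter> space (Pen s j))"
    by (rule emeasure_distr[OF meas_Pair_I Ev_sets])
  also have "(\<lambda>y. (I s, y)) -` Ev u x \<inter> space (Pen s j) = (if u \<in> I s then {y \<in> space (Pen s j). y u \<in> {..min v x}} else {})"
    by (auto simp: Ev_def)
  finally have e: "emeasure (Dk s j) (Ev u x) = (if u \<in> I s then emeasure (Pen s j) {y \<in> space (Pen s j). y u \<in> {..min v x}} else 0)"
    by simp
  show ?thesis
  proof (cases "u \<in> I s")
    case True
    define MM where "MM = (\<lambda>u. if u \<in> I s then interval_measure (phs s j) else return borel (0::real))"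
    interpret P: product_prob_space MM UNIV
      unfolding product_prob_space_def product_prob_space_axioms_def product_sigma_finite_def
      using Pen_comp_prob[OF j s ts] by (auto simp: MM_def prob_space_imp_sigma_finite)
    have PM: "Pen s j = PiM UNIV MM" unfolding Pen_def' MM_def ..
    have "emeasure (PiM UNIV MM) {y \<in> space (PiM UNIV MM). y u \<in> {..min v x}} = emeasure (MM u) {..min v x}"
      by (rule P.emeasure_PiM_Collect_single) (auto simp: MM_def True)
    also have "\<dots> = ennreal (phs s j (min v x))" using True phs_props(2)[OF j s ts] by (simp add: MM_def)
    finally show ?thesis using e True PM by simp
  next
    case False then show ?thesis using e by simp
  qed
qed

lemma phs_nn: "j \<in> {1..n} \<Longrightarrow> s \<in> {1..d} \<Longrightarrow> 0 < t s j \<Longrightarrow> 0 \<le> phs s j x"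
  using phs_props(3)[of j s x] measure_nonneg[of "interval_measure (phs s j)" "{..x}"] by simp

lemma tphs_nn: "j \<in> {1..n} \<Longrightarrow> s \<in> {1..d} \<Longrightarrow> 0 \<le> t s j * phs s j x"
proof -
  assume j: "j \<in> {1..n}" and s: "s \<in> {1..d}"
  show ?thesis
  proof (cases "0 < t s j")
    case True then show ?thesis using phs_nn[OF j s True, of x] by simp
  next
    case False then have "t s j = 0" using t_nn[OF j s] by simp
    then show ?thesis by simp
  qed
qed

lemma part_ex: "\<exists>s\<in>{1..d}. u \<in> I s"
  using Gmv unfolding mean_valid_def by blast

lemma part_uniq: "s \<in> {1..d} \<Longrightarrow> s' \<in> {1..d} \<Longrightarrow> u \<in> I s \<Longrightarrow> u \<in> I s' \<Longrightarrow> s = s'"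
  using Gmv unfolding mean_valid_def by blast

lemma Dk_space: "j \<in> {1..n} \<Longrightarrow> s \<in> set_pmf (tau j) \<Longrightarrow> Dk s j \<in> space (subprob_algebra actM)"
proof -
  assume j: "j \<in> {1..n}" and s: "s \<in> set_pmf (tau j)"
  from set_tau[OF j s] have st: "s \<in> {1..d}" "0 < t s j" by auto
  have "prob_space (Dk s j)" by (rule Dk_prob[OF j st(1) st(2)])
  then show ?thesis by (simp add: space_subprob_algebra prob_space_imp_subprob_space)
qed

lemma strat_Ev:
  assumes j: "j \<in> {1..n}" and s0: "s0 \<in> {1..d}" and u: "u \<in> I s0"
  shows "emeasure (strat j) (Ev u x) = ennreal (t s0 j * phs s0 j (min v x))"
proof -
  have "emeasure (strat j) (Ev u x) = (\<integral>\<^sup>+s. emeasure (Dk s j) (Ev u x) \<partial>measure_pmf (tau j))"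
    unfolding strat_def' by (rule emeasure_bind_pmf[OF Dk_space[OF j] Dk_sets Ev_sets])
  also have "\<dots> = (\<Sum>s\<in>{1..d}. emeasure (Dk s j) (Ev u x) * pmf (tau j) s)"
    by (rule nn_integral_measure_pmf_support) (use set_tau[OF j] in auto)
  also have "\<dots> = (\<Sum>s\<in>{1..d}. if s = s0 then ennreal (t s0 j * phs s0 j (min v x)) else 0)"
  proof (intro sum.cong refl)
    fix s assume s: "s \<in> {1..d}"
    show "emeasure (Dk s j) (Ev u x) * pmf (tau j) s = (if s = s0 then ennreal (t s0 j * phs s0 j (min v x)) else 0)"
    proof (cases "0 < t s j")
      case False
      then have t0: "t s j = 0" using t_nn[OF j s] by simp
      then show ?thesis using pmf_tau[OF j, of s] s by auto
    next
      case True
      note de = Dk_Ev[OF j s True, of u x]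
      show ?thesis
      proof (cases "s = s0")
        case True': True
        then show ?thesis using de u pmf_tau[OF j, of s] s True phs_nn[OF j s True, of "min v x"]
          by (simp add: ennreal_mult' mult.commute)
      next
        case False
        then have "u \<notin> I s" using part_uniq[OF s s0] u by auto
        then show ?thesis using de False by simp
      qed
    qed
  qed
  also have "\<dots> = ennreal (t s0 j * phs s0 j (min v x))" using s0 by (simp add: sum.delta)
  finally show ?thesis .
qed

lemma K0_space: "k \<in> set_pmf Q \<Longrightarrow> K0 k \<in> space (subprob_algebra actM)"
  using K0_prob K0_sets by (simp add: space_subprob_algebra prob_space_imp_subprob_space)

lemma Nopp_Ev:
  assumes s0: "s0 \<in> {1..d}" and u: "u \<in> I s0"
  shows "emeasure Nopp (Ev u x) = ennreal (FF l m c v f g n (al s0) (min v x))"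
proof -
  have "emeasure Nopp (Ev u x) = (\<integral>\<^sup>+k. emeasure (K0 k) (Ev u x) \<partial>measure_pmf Q)"
    unfolding Nopp_def' by (rule emeasure_bind_pmf[OF K0_space K0_sets Ev_sets])
  also have "\<dots> = (\<Sum>k\<in>{..n}. emeasure (K0 k) (Ev u x) * pmf Q k)"
    by (rule nn_integral_measure_pmf_support) (use Qsupp in auto)
  also have "{..n} = insert 0 {1..n}" by auto
  also have "(\<Sum>k\<in>insert 0 {1..n}. emeasure (K0 k) (Ev u x) * pmf Q k)
      = (\<Sum>k\<in>{1..n}. emeasure (K0 k) (Ev u x) * pmf Q k)"
  proof -
    have "emeasure (K0 0) (Ev u x) = indicator (Ev u x) no_offer"
      unfolding K0_def by (simp add: emeasure_return[OF Ev_sets])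
    also have "\<dots> = 0" by (simp add: Ev_def no_offer_def)
    finally show ?thesis by (subst sum.insert) auto
  qed
  also have "\<dots> = (\<Sum>k\<in>{1..n}. ennreal (al s0 k * phs s0 k (min v x)))"
  proof (intro sum.cong refl)
    fix k assume k: "k \<in> {1..n}"
    then have "K0 k = strat k" by (simp add: K0_def)
    then have "emeasure (K0 k) (Ev u x) * pmf Q k = ennreal (t s0 k * phs s0 k (min v x)) * ennreal (pmf Q k)"
      using strat_Ev[OF k s0 u] by simp
    also have "\<dots> = ennreal (al s0 k * phs s0 k (min v x))"
      using tphs_nn[OF k s0] by (simp add: ennreal_mult'[symmetric] al_def mult_ac)
    finally show "emeasure (K0 k) (Ev u x) * pmf Q k = ennreal (al s0 k * phs s0 k (min v x))" .
  qed
  also have "\<dots> = ennreal (\<Sum>k\<in>{1..n}. al s0 k * phs s0 k (min v x))"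
    using tphs_nn s0 by (intro sum_ennreal) (auto simp: al_def mult.assoc intro!: mult_nonneg_nonneg)
  also have "(\<Sum>k\<in>{1..n}. al s0 k * phs s0 k (min v x)) = FF l m c v f g n (al s0) (min v x)"
    by (simp add: FF_def)
  finally show ?thesis .
qed

lemma FF_nn: "s0 \<in> {1..d} \<Longrightarrow> 0 \<le> FF l m c v f g n (al s0) x"
  unfolding FF_def using tphs_nn
  by (intro sum_nonneg) (auto simp: al_def mult.assoc intro!: mult_nonneg_nonneg)

lemma Nopp_Ev_measure:
  assumes s0: "s0 \<in> {1..d}" and u: "u \<in> I s0"
  shows "measure Nopp (Ev u x) = FF l m c v f g n (al s0) (min v x)"
  using Nopp_Ev[OF s0 u, of x] FF_nn[OF s0, of "min v x"] by (simp add: measure_def)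

end


lemma pred_act:
  assumes Yk: "Yk \<in> measurable M (actM :: ('v::finite) action measure)" and X: "X \<in> borel_measurable M"
  shows "Measurable.pred M (\<lambda>\<omega>. u \<in> fst (Yk \<omega>) \<and> snd (Yk \<omega>) u \<le> v \<and> snd (Yk \<omega>) u < X \<omega>)"
    and "Measurable.pred M (\<lambda>\<omega>. u \<in> fst (Yk \<omega>) \<and> snd (Yk \<omega>) u \<le> v \<and> snd (Yk \<omega>) u = X \<omega>)"
proof -
  have Yk'[measurable]: "Yk \<in> measurable M (count_space UNIV \<Otimes>\<^sub>M (\<Pi>\<^sub>M u\<in>(UNIV::'v set). (borel::real measure)))"
    using Yk by (simp add: actM_def)
  note X[measurable]
  show "Measurable.pred M (\<lambda>\<omega>. u \<in> fst (Yk \<omega>) \<and> snd (Yk \<omega>) u \<le> v \<and> snd (Yk \<omega>) u < X \<omega>)"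
    by measurable
  show "Measurable.pred M (\<lambda>\<omega>. u \<in> fst (Yk \<omega>) \<and> snd (Yk \<omega>) u \<le> v \<and> snd (Yk \<omega>) u = X \<omega>)"
    by measurable
qed

lemma real_card_sum: "finite K \<Longrightarrow> real (card {k\<in>K. P k}) = (\<Sum>k\<in>K. if P k then 1 else 0)"
  by (simp add: sum.If_cases Int_def)

lemma meas_card:
  assumes K: "finite K" and P: "\<And>k. k \<in> K \<Longrightarrow> Measurable.pred M (P k)"
  shows "(\<lambda>\<omega>. real (card {k\<in>K. P k \<omega>})) \<in> borel_measurable M"
proof -
  have "(\<lambda>\<omega>. \<Sum>k\<in>K. if P k \<omega> then 1 else 0 :: real) \<in> borel_measurable M"
    using P by (intro borel_measurable_sum) measurable
  then show ?thesis by (simp add: real_card_sum[OF K])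
qed

lemma win_meas:
  assumes K: "finite K" and Y: "\<And>k. k \<in> K \<Longrightarrow> (\<lambda>\<omega>. Y \<omega> k) \<in> measurable M (actM :: ('v::finite) action measure)"
    and X: "X \<in> borel_measurable M"
  shows "(\<lambda>\<omega>. win_prob m v K (Y \<omega>) u (X \<omega>)) \<in> borel_measurable M"
proof -
  define RA where "RA \<omega> = real (card {k\<in>K. u \<in> fst (Y \<omega> k) \<and> snd (Y \<omega> k) u \<le> v \<and> snd (Y \<omega> k) u < X \<omega>})" for \<omega>
  define RT where "RT \<omega> = real (card {k\<in>K. u \<in> fst (Y \<omega> k) \<and> snd (Y \<omega> k) u \<le> v \<and> snd (Y \<omega> k) u = X \<omega>})" for \<omega>
  have [measurable]: "RA \<in> borel_measurable M" unfolding RA_def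
    by (rule meas_card[OF K]) (rule pred_act(1)[OF Y X])
  have [measurable]: "RT \<in> borel_measurable M" unfolding RT_def
    by (rule meas_card[OF K]) (rule pred_act(2)[OF Y X])
  note X[measurable]
  have eq: "win_prob m v K (Y \<omega>) u (X \<omega>) =
     (if X \<omega> \<le> v \<and> RA \<omega> < real m then min 1 ((real m - RA \<omega>) / (RT \<omega> + 1)) else 0)" for \<omega>
    unfolding win_prob_def Let_def RA_def RT_def by simp
  have "(\<lambda>\<omega>. if X \<omega> \<le> v \<and> RA \<omega> < real m then min 1 ((real m - RA \<omega>) / (RT \<omega> + 1)) else 0)
      \<in> borel_measurable M" by measurable
  then show ?thesis unfolding eq .
qed

lemma win_bounds:
  assumes K: "finite K" and xv: "x \<le> v"
  shows "win_prob m v K ys u x \<le> (if card {k\<in>K. u \<in> fst (ys k) \<and> snd (ys k) u \<le> v \<and> snd (ys k) u < x} < m then 1 else 0)"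
    and "(if card {k\<in>K. u \<in> fst (ys k) \<and> snd (ys k) u \<le> v \<and> snd (ys k) u \<le> x} < m then 1 else 0) \<le> win_prob m v K ys u x"
    and "0 \<le> win_prob m v K ys u x"
proof -
  define A where "A = {k\<in>K. u \<in> fst (ys k) \<and> snd (ys k) u \<le> v \<and> snd (ys k) u < x}"
  define T where "T = {k\<in>K. u \<in> fst (ys k) \<and> snd (ys k) u \<le> v \<and> snd (ys k) u = x}"
  have AT: "{k\<in>K. u \<in> fst (ys k) \<and> snd (ys k) u \<le> v \<and> snd (ys k) u \<le> x} = A \<union> T"
    by (auto simp: A_def T_def)
  have cAT: "card (A \<union> T) = card A + card T"
    using K by (intro card_Un_disjoint) (auto simp: A_def T_def)
  have w: "win_prob m v K ys u x = (if card A < m then min 1 ((real m - real (card A)) / (real (card T) + 1)) else 0)"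
    unfolding win_prob_def Let_def A_def T_def using xv by simp
  show "win_prob m v K ys u x \<le> (if card {k\<in>K. u \<in> fst (ys k) \<and> snd (ys k) u \<le> v \<and> snd (ys k) u < x} < m then 1 else 0)"
    unfolding w A_def[symmetric] by auto
  show "0 \<le> win_prob m v K ys u x"
    unfolding w by auto
  show "(if card {k\<in>K. u \<in> fst (ys k) \<and> snd (ys k) u \<le> v \<and> snd (ys k) u \<le> x} < m then 1 else 0) \<le> win_prob m v K ys u x"
  proof (cases "card A + card T < m")
    case True
    then have "1 \<le> (real m - real (card A)) / (real (card T) + 1)" by (simp add: field_simps)
    then show ?thesis unfolding w AT cAT using True by simp
  next
    case False
    then show ?thesis unfolding AT cAT w by auto
  qed
qed

lemma win_gt: "v < x \<Longrightarrow> win_prob m v K ys u x = 0"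
  unfolding win_prob_def Let_def by simp


context eqg begin

definition Opp :: "nat \<Rightarrow> nat set" where "Opp i = {..<l} - {i}"
definition PP :: "nat \<Rightarrow> (nat \<Rightarrow> 'v action) measure" where "PP i = PiM (Opp i) (\<lambda>_. Nopp)"

lemma Opp_finite: "finite (Opp i)" by (simp add: Opp_def)
lemma Opp_card: "i < l \<Longrightarrow> card (Opp i) = l - 1" by (simp add: Opp_def)

lemma PP_prob: "prob_space (PP i)"
  unfolding PP_def by (rule prob_space_PiM) (rule Nopp_prob)

lemma exp_payoff_PP: "exp_payoff l m c v f Q (\<lambda>i. strat) i j a = (\<integral>ys. real_payoff l m c v (f j) i a ys \<partial>PP i)"
  unfolding exp_payoff_def PP_def Opp_def Nopp_def ..

lemma comp_meas: "k \<in> Opp i \<Longrightarrow> (\<lambda>ys. ys k) \<in> measurable (PP i) actM"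
proof -
  assume k: "k \<in> Opp i"
  have "(\<lambda>ys. ys k) \<in> measurable (PP i) Nopp"
    unfolding PP_def by (rule measurable_component_singleton[OF k])
  then show ?thesis using Nopp_sets by (simp cong: measurable_cong_sets)
qed

lemma win_meas_PP: "(\<lambda>ys. win_prob m v (Opp i) ys u x) \<in> borel_measurable (PP i)"
proof -
  have "(\<lambda>ys. win_prob m v (Opp i) ((\<lambda>ys. ys) ys) u ((\<lambda>_. x) ys)) \<in> borel_measurable (PP i)"
    by (rule win_meas[OF Opp_finite]) (auto intro: comp_meas)
  then show ?thesis by simp
qed

lemma win_int_PP: "integrable (PP i) (\<lambda>ys. win_prob m v (Opp i) ys u x)"
proof -
  interpret P: prob_space "PP i" by (rule PP_prob)
  have "\<And>ys. norm (win_prob m v (Opp i) ys u x) \<le> 1"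
    unfolding win_prob_def Let_def by auto
  then show ?thesis
    by (intro P.integrable_const_bound[of _ 1] win_meas_PP) auto
qed

definition EvS :: "nat \<Rightarrow> 'v action set \<Rightarrow> (nat \<Rightarrow> 'v action) set" where
  "EvS i B = {ys \<in> space (PP i). card {k\<in>Opp i. ys k \<in> B} < m}"

lemma EvS_sets: "B \<in> sets actM \<Longrightarrow> EvS i B \<in> sets (PP i)"
proof -
  assume B: "B \<in> sets actM"
  have "(\<lambda>ys. real (card {k\<in>Opp i. ys k \<in> B})) \<in> borel_measurable (PP i)"
  proof (rule meas_card[OF Opp_finite])
    fix k assume "k \<in> Opp i"
    then have [measurable]: "(\<lambda>ys. ys k) \<in> measurable (PP i) actM" by (rule comp_meas)
    note B[measurable]
    show "Measurable.pred (PP i) (\<lambda>ys. ys k \<in> B)" by measurable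
  qed
  then have "Measurable.pred (PP i) (\<lambda>ys. real (card {k\<in>Opp i. ys k \<in> B}) < real m)" by measurable
  then show ?thesis by (simp add: EvS_def pred_def)
qed

lemma EvS_measure: "i < l \<Longrightarrow> B \<in> sets actM \<Longrightarrow> measure (PP i) (EvS i B) = Wfun l m (measure Nopp B)"
proof -
  assume i: "i < l" and B: "B \<in> sets actM"
  have "measure (PP i) (EvS i B) = Sb (card (Opp i)) m (measure Nopp B)"
    unfolding EvS_def PP_def by (rule binom_prob[OF Nopp_prob Opp_finite]) (use B Nopp_sets in simp)
  then show ?thesis using Opp_card[OF i] W_Sb by simp
qed

lemma Ewin_upper:
  assumes i: "i < l" and x: "x \<le> v"
  shows "(\<integral>ys. win_prob m v (Opp i) ys u x \<partial>PP i) \<le> Wfun l m (measure Nopp (Evl u x))"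
proof -
  interpret P: prob_space "PP i" by (rule PP_prob)
  have "(\<integral>ys. win_prob m v (Opp i) ys u x \<partial>PP i) \<le> (\<integral>ys. indicator (EvS i (Evl u x)) ys \<partial>PP i)"
  proof (rule integral_mono)
    show "integrable (PP i) (\<lambda>ys. win_prob m v (Opp i) ys u x)" by (rule win_int_PP)
    show "integrable (PP i) (indicator (EvS i (Evl u x)) :: _ \<Rightarrow> real)"
      using EvS_sets[OF Evl_sets] P.emeasure_finite[of "EvS i (Evl u x)"] by (intro integrable_real_indicator) (auto simp: less_top[symmetric])
    fix ys assume ys: "ys \<in> space (PP i)"
    have eq: "{k\<in>Opp i. u \<in> fst (ys k) \<and> snd (ys k) u \<le> v \<and> snd (ys k) u < x} = {k\<in>Opp i. ys k \<in> Evl u x}"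
      by (auto simp: Evl_def)
    show "win_prob m v (Opp i) ys u x \<le> indicator (EvS i (Evl u x)) ys"
      using win_bounds(1)[OF Opp_finite[of i] x, where ys=ys and u=u and m=m] ys unfolding eq by (auto simp: EvS_def indicator_def)
  qed
  also have "\<dots> = measure (PP i) (EvS i (Evl u x))"
    using EvS_sets[OF Evl_sets, of i u x] by (simp add: Int_absorb2 sets.sets_into_space)
  also have "\<dots> = Wfun l m (measure Nopp (Evl u x))" by (rule EvS_measure[OF i Evl_sets])
  finally show ?thesis .
qed

lemma Ewin_lower:
  assumes i: "i < l" and x: "x \<le> v"
  shows "Wfun l m (measure Nopp (Ev u x)) \<le> (\<integral>ys. win_prob m v (Opp i) ys u x \<partial>PP i)"
proof -
  interpret P: prob_space "PP i" by (rule PP_prob)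
  have "Wfun l m (measure Nopp (Ev u x)) = measure (PP i) (EvS i (Ev u x))"
    by (rule EvS_measure[OF i Ev_sets, symmetric])
  also have "\<dots> = (\<integral>ys. indicator (EvS i (Ev u x)) ys \<partial>PP i)"
    using EvS_sets[OF Ev_sets, of i u x] by (simp add: Int_absorb2 sets.sets_into_space)
  also have "\<dots> \<le> (\<integral>ys. win_prob m v (Opp i) ys u x \<partial>PP i)"
  proof (rule integral_mono)
    show "integrable (PP i) (\<lambda>ys. win_prob m v (Opp i) ys u x)" by (rule win_int_PP)
    show "integrable (PP i) (indicator (EvS i (Ev u x)) :: _ \<Rightarrow> real)"
      using EvS_sets[OF Ev_sets] P.emeasure_finite[of "EvS i (Ev u x)"] by (intro integrable_real_indicator) (auto simp: less_top[symmetric])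
    fix ys assume ys: "ys \<in> space (PP i)"
    have eq: "{k\<in>Opp i. u \<in> fst (ys k) \<and> snd (ys k) u \<le> v \<and> snd (ys k) u \<le> x} = {k\<in>Opp i. ys k \<in> Ev u x}"
      by (auto simp: Ev_def)
    show "indicator (EvS i (Ev u x)) ys \<le> win_prob m v (Opp i) ys u x"
      using win_bounds(2)[OF Opp_finite[of i] x, where ys=ys and u=u and m=m] ys unfolding eq by (auto simp: EvS_def indicator_def)
  qed
  finally show ?thesis .
qed

lemma Ewin_nn: "0 \<le> (\<integral>ys. win_prob m v (Opp i) ys u x \<partial>PP i)"
  by (intro integral_nonneg_AE AE_I2) (auto simp: win_prob_def Let_def)

lemma Ewin_gt: "v < x \<Longrightarrow> (\<integral>ys. win_prob m v (Opp i) ys u x \<partial>PP i) = 0"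
proof -
  assume vx: "v < x"
  have "(\<lambda>ys. win_prob m v (Opp i) ys u x) = (\<lambda>_. 0)" by (rule ext) (rule win_gt[OF vx])
  then show ?thesis by simp
qed

abbreviation "Ew i u x \<equiv> (\<integral>ys. win_prob m v (Opp i) ys u x \<partial>PP i)"

lemma Nopp_measure_le1: "measure Nopp A \<le> 1"
  using prob_space.prob_le_1[OF Nopp_prob] .

lemma node_up:
  assumes i: "i < l" and j: "j \<in> {1..n}" and s0: "s0 \<in> {1..d}" and u: "u \<in> I s0"
  shows "real (card (I s0)) * ((f j x - c) * Ew i u x) \<le> KK j"
proof -
  have KK0: "0 < KK j" by (rule KK_pos[OF j])
  consider "v < x" | "x \<le> v" "f j x \<le> c" | "x \<le> v" "c < f j x" by linarith
  then show ?thesis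
  proof cases
    case 1 then show ?thesis using Ewin_gt[OF 1, of i u] KK0 by simp
  next
    case 2
    have p0: "(f j x - c) * Ew i u x \<le> 0"
      using 2 Ewin_nn[of i u x] by (intro mult_nonpos_nonneg) auto
    have "real (card (I s0)) * ((f j x - c) * Ew i u x) \<le> 0"
      by (rule mult_nonneg_nonpos[OF _ p0]) simp
    then show ?thesis using KK0 by simp
  next
    case 3
    note xv = 3(1) and cx = 3(2)
    define Ms where "Ms = real (card (I s0))"
    have Ms: "0 < Ms" using Mpos[OF s0] by (simp add: Ms_def)
    have gx: "g j c < x" using g_less_iff_f[OF j] cx by simp
    define h where "h y = KK j * (f j x - c) / (f j y - c)" for y
    have bound: "Ms * ((f j x - c) * Ew i u x) \<le> h y" if y: "g j c < y" "y < x" for y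
    proof -
      have yv: "y \<le> v" using y xv by simp
      have cy: "c < f j y" using g_less_iff_f[OF j] y by simp
      have sub: "Ev u y \<subseteq> Evl u x" using y by (auto simp: Ev_def Evl_def)
      have "measure Nopp (Ev u y) \<le> measure Nopp (Evl u x)"
      proof -
        interpret N: prob_space Nopp by (rule Nopp_prob)
        show ?thesis using sub Evl_sets[of u x] Nopp_sets by (intro N.finite_measure_mono) auto
      qed
      then have mle: "FF l m c v f g n (al s0) y \<le> measure Nopp (Evl u x)"
        using Nopp_Ev_measure[OF s0 u, of y] yv by (simp add: min_absorb2)
      have "Ew i u x \<le> Wfun l m (measure Nopp (Evl u x))" by (rule Ewin_upper[OF i xv])
      also have "\<dots> \<le> Wfun l m (FF l m c v f g n (al s0) y)"
        using mle FF_nn[OF s0] Nopp_measure_le1 by (intro W_mono) auto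
      finally have e1: "Ew i u x \<le> Wfun l m (FF l m c v f g n (al s0) y)" .
      have nb: "Ms * ((f j y - c) * Wfun l m (FF l m c v f g n (al s0) y)) \<le> KK j"
        using node_bound[OF s0 j yv] cy by (simp add: Ms_def)
      have "Ms * ((f j x - c) * Ew i u x) \<le> Ms * ((f j x - c) * Wfun l m (FF l m c v f g n (al s0) y))"
        using e1 cx Ms by (intro mult_left_mono) auto
      also have "\<dots> = (Ms * ((f j y - c) * Wfun l m (FF l m c v f g n (al s0) y))) * ((f j x - c) / (f j y - c))"
        using cy by (simp add: field_simps)
      also have "\<dots> \<le> KK j * ((f j x - c) / (f j y - c))"
        using nb cx cy by (intro mult_right_mono) auto
      finally show ?thesis by (simp add: h_def)
    qed
    have lim: "(h \<longlongrightarrow> KK j) (at_left x)"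
    proof -
      have fa: "(f j \<longlongrightarrow> f j x) (at x)" using f_cont[OF j, of x] by (simp add: isCont_def)
      have fc: "(f j \<longlongrightarrow> f j x) (at_left x)" by (rule tendsto_mono[OF at_within_le_at fa])
      have dd: "((\<lambda>y. f j y - c) \<longlongrightarrow> f j x - c) (at_left x)" by (rule tendsto_diff[OF fc tendsto_const])
      have "((\<lambda>y. KK j * (f j x - c) / (f j y - c)) \<longlongrightarrow> KK j * (f j x - c) / (f j x - c)) (at_left x)"
        by (rule tendsto_divide[OF tendsto_const dd]) (use cx in simp)
      then have "(h \<longlongrightarrow> KK j * (f j x - c) / (f j x - c)) (at_left x)" by (simp add: h_def[abs_def])
      then show ?thesis using cx by simp
    qed
    have ev: "eventually (\<lambda>y. Ms * ((f j x - c) * Ew i u x) \<le> h y) (at_left x)"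
      using eventually_at_left_real[OF gx] by eventually_elim (auto intro: bound)
    have "Ms * ((f j x - c) * Ew i u x) \<le> KK j"
      by (rule tendsto_le[OF trivial_limit_at_left_real lim tendsto_const ev])
    then show ?thesis by (simp add: Ms_def)
  qed
qed

lemma node_low:
  assumes i: "i < l" and j: "j \<in> {1..n}" and s0: "s0 \<in> {1..d}" and u: "u \<in> I s0"
    and x: "Lpen l m c v f g n (al s0) j \<le> x" "x \<le> Upen l m c v f g n (al s0) j"
  shows "ppr l m c v f g n (al s0) j - c \<le> (f j x - c) * Ew i u x"
proof -
  interpret C: chain l m c v f g n "al s0" by (rule chainS[OF s0])
  have xv: "x \<le> v" using x C.basic[OF j] by simp
  have cx: "c < f j x" using C.fx_gt[OF j x(1)] .
  have "C.p j - c = (f j x - c) * Wfun l m (C.Fc x)" using C.pay_eq[OF j x] by simp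
  also have "C.Fc x = measure Nopp (Ev u x)"
    using Nopp_Ev_measure[OF s0 u, of x] xv C.Fc_FF by (simp add: min_absorb2)
  also have "(f j x - c) * Wfun l m (measure Nopp (Ev u x)) \<le> (f j x - c) * Ew i u x"
    using Ewin_lower[OF i xv, of u] cx by (intro mult_left_mono) auto
  finally show ?thesis .
qed

end


context eqg begin

abbreviation "EP i j a \<equiv> exp_payoff l m c v f Q (\<lambda>i. strat) i j a"

lemma EP_sum:
  assumes i: "i < l"
  shows "EP i j a = (\<Sum>u\<in>fst a. (f j (snd a u) - c) * Ew i u (snd a u))"
proof -
  have "EP i j a = (\<integral>ys. (\<Sum>u\<in>fst a. (f j (snd a u) - c) * win_prob m v (Opp i) ys u (snd a u)) \<partial>PP i)"
    unfolding exp_payoff_PP real_payoff_def Opp_def ..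
  also have "\<dots> = (\<Sum>u\<in>fst a. (\<integral>ys. (f j (snd a u) - c) * win_prob m v (Opp i) ys u (snd a u) \<partial>PP i))"
    by (rule Bochner_Integration.integral_sum) (intro integrable_mult_right win_int_PP)
  also have "\<dots> = (\<Sum>u\<in>fst a. (f j (snd a u) - c) * Ew i u (snd a u))"
    by simp
  finally show ?thesis .
qed

lemma f_meas: "j \<in> {1..n} \<Longrightarrow> f j \<in> borel_measurable borel"
  using f_cont by (intro borel_measurable_continuous_onI) (simp add: continuous_on_eq_continuous_at)

lemma EP_meas:
  assumes j: "j \<in> {1..n}"
  shows "(\<lambda>a. EP i j a) \<in> borel_measurable actM"
proof -
  interpret P: prob_space "PP i" by (rule PP_prob)
  have fm[measurable]: "f j \<in> borel_measurable borel" by (rule f_meas[OF j])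
  have sndm[measurable]: "(\<lambda>\<omega>. snd (fst \<omega>) u) \<in> borel_measurable (actM \<Otimes>\<^sub>M PP i)" for u :: 'v
  proof -
    have "(\<lambda>a::'v action. snd a u) \<in> borel_measurable actM" unfolding actM_def by measurable
    then show ?thesis by measurable
  qed
  have fstm: "Measurable.pred (actM \<Otimes>\<^sub>M PP i) (\<lambda>\<omega>. u \<in> fst (fst \<omega>))" for u :: 'v
  proof -
    have "Measurable.pred actM (\<lambda>a::'v action. u \<in> fst a)" unfolding actM_def by measurable
    then show ?thesis by measurable
  qed
  have wm[measurable]: "(\<lambda>\<omega>. win_prob m v (Opp i) (snd \<omega>) u (snd (fst \<omega>) u)) \<in> borel_measurable (actM \<Otimes>\<^sub>M PP i)" for u
  proof (rule win_meas[OF Opp_finite])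
    fix k assume k: "k \<in> Opp i"
    have "(\<lambda>ys. ys k) \<in> measurable (PP i) actM" by (rule comp_meas[OF k])
    then show "(\<lambda>\<omega>. snd \<omega> k) \<in> measurable (actM \<Otimes>\<^sub>M PP i) actM" by measurable
  qed (rule sndm)
  have eq: "(\<lambda>(a, ys). real_payoff l m c v (f j) i a ys) =
      (\<lambda>\<omega>. \<Sum>u\<in>UNIV. if u \<in> fst (fst \<omega>) then (f j (snd (fst \<omega>) u) - c) * win_prob m v (Opp i) (snd \<omega>) u (snd (fst \<omega>) u) else 0)"
    by (auto simp: fun_eq_iff real_payoff_def Opp_def sum.If_cases Int_def)
  have "(\<lambda>(a, ys). real_payoff l m c v (f j) i a ys) \<in> borel_measurable (actM \<Otimes>\<^sub>M PP i)"
    unfolding eq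
  proof (intro borel_measurable_sum)
    fix u :: 'v
    note fstm[of u, measurable]
    show "(\<lambda>\<omega>. if u \<in> fst (fst \<omega>) then (f j (snd (fst \<omega>) u) - c) * win_prob m v (Opp i) (snd \<omega>) u (snd (fst \<omega>) u) else 0)
        \<in> borel_measurable (actM \<Otimes>\<^sub>M PP i)" by measurable
  qed
  then have "(\<lambda>a. \<integral>ys. real_payoff l m c v (f j) i a ys \<partial>PP i) \<in> borel_measurable actM"
    by (rule P.borel_measurable_lebesgue_integral)
  then show ?thesis unfolding exp_payoff_PP .
qed

definition sof :: "'v \<Rightarrow> nat" where "sof u = (SOME s. s \<in> {1..d} \<and> u \<in> I s)"

lemma sof: "sof u \<in> {1..d} \<and> u \<in> I (sof u)"
  unfolding sof_def using part_ex[of u] by (rule someI2_bex) auto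

lemma sof_eq: "s \<in> {1..d} \<Longrightarrow> u \<in> I s \<Longrightarrow> sof u = s"
  using sof[of u] part_uniq by blast

lemma dev_EP:
  assumes i: "i < l" and j: "j \<in> {1..n}" and ind: "indep_set E (fst a)"
  shows "EP i j a \<le> KK j"
proof -
  define S where "S = fst a"
  define h where "h u = KK j / real (card (I (sof u)))" for u
  have tm: "(f j (snd a u) - c) * Ew i u (snd a u) \<le> h u" for u
  proof -
    have s0: "sof u \<in> {1..d}" and u: "u \<in> I (sof u)" using sof by auto
    have Mp: "0 < real (card (I (sof u)))" using Mpos[OF s0] by simp
    have "real (card (I (sof u))) * ((f j (snd a u) - c) * Ew i u (snd a u)) \<le> KK j"
      by (rule node_up[OF i j s0 u])
    then have "((f j (snd a u) - c) * Ew i u (snd a u)) * real (card (I (sof u))) \<le> KK j"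
      by (simp add: mult.commute)
    then show ?thesis unfolding h_def using pos_le_divide_eq[OF Mp] by blast
  qed
  have "EP i j a = (\<Sum>u\<in>S. (f j (snd a u) - c) * Ew i u (snd a u))" unfolding S_def by (rule EP_sum[OF i])
  also have "\<dots> \<le> (\<Sum>u\<in>S. h u)" by (intro sum_mono tm)
  also have "S = (\<Union>s\<in>{1..d}. S \<inter> I s)" using part_ex by blast
  also have "(\<Sum>u\<in>(\<Union>s\<in>{1..d}. S \<inter> I s). h u) = (\<Sum>s\<in>{1..d}. \<Sum>u\<in>S \<inter> I s. h u)"
    by (rule sum.UNION_disjoint) (use part_uniq in auto)
  also have "\<dots> = (\<Sum>s\<in>{1..d}. KK j * (real (card (S \<inter> I s)) / real (card (I s))))"
  proof (intro sum.cong refl)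
    fix s assume s: "s \<in> {1..d}"
    have "(\<Sum>u\<in>S \<inter> I s. h u) = (\<Sum>u\<in>S \<inter> I s. KK j / real (card (I s)))"
      using sof_eq[OF s] by (intro sum.cong refl) (auto simp: h_def)
    then show "(\<Sum>u\<in>S \<inter> I s. h u) = KK j * (real (card (S \<inter> I s)) / real (card (I s)))" by simp
  qed
  also have "\<dots> = KK j * (\<Sum>s=1..d. real (card (S \<inter> I s)) / real (card (I s)))"
    by (simp add: sum_distrib_left)
  also have "\<dots> \<le> KK j * 1"
    using Gmv ind KK_pos[OF j] unfolding mean_valid_def S_def by (intro mult_left_mono) auto
  finally show ?thesis by simp
qed

lemma EP_good:
  assumes i: "i < l" and j: "j \<in> {1..n}" and s: "s \<in> {1..d}" and ts: "0 < t s j"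
    and x: "\<forall>u\<in>I s. Lpen l m c v f g n (al s) j \<le> x u \<and> x u \<le> Upen l m c v f g n (al s) j"
  shows "EP i j (I s, x) = KK j"
proof (rule antisym)
  have ind: "indep_set E (I s)" using Gmv s unfolding mean_valid_def maximal_indep_set_def by auto
  show "EP i j (I s, x) \<le> KK j" using dev_EP[OF i j, of "(I s, x)"] ind by simp
  have "KK j = real (card (I s)) * (ppr l m c v f g n (al s) j - c)"
    unfolding KK_def using Kequal[OF j s ts] by simp
  also have "\<dots> = (\<Sum>u\<in>I s. ppr l m c v f g n (al s) j - c)" by simp
  also have "\<dots> \<le> (\<Sum>u\<in>I s. (f j (x u) - c) * Ew i u (x u))"
    using x node_low[OF i j s] by (intro sum_mono) auto
  also have "\<dots> = EP i j (I s, x)" using EP_sum[OF i, of j "(I s, x)"] by simp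
  finally show "KK j \<le> EP i j (I s, x)" .
qed

lemma AE_interval:
  assumes j: "j \<in> {1..n}" and s: "s \<in> {1..d}" and ts: "0 < t s j"
  shows "AE y in interval_measure (phs s j). Lpen l m c v f g n (al s) j \<le> y \<and> y \<le> Upen l m c v f g n (al s) j"
proof -
  interpret C: chain l m c v f g n "al s" by (rule chainS[OF s])
  interpret D: real_distribution "interval_measure (phs s j)" by (rule phs_props(1)[OF j s ts])
  have a: "0 < al s j" by (rule al_pos[OF j s ts])
  have pL: "phs s j (C.L j) = 0" using C.aphi_low[OF j, of "C.L j"] a by simp
  have pU: "phs s j (C.U j) = 1" using C.aphi_high[OF j, of "C.U j"] a by simp
  have e1: "emeasure (interval_measure (phs s j)) {..C.L j} = 0"
    using phs_props(2)[OF j s ts, of "C.L j"] pL by simp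
  have "measure (interval_measure (phs s j)) (UNIV - {..C.U j}) = 1 - measure (interval_measure (phs s j)) {..C.U j}"
    using D.prob_compl[of "{..C.U j}"] by simp
  also have "\<dots> = 0" using phs_props(3)[OF j s ts, of "C.U j"] pU by simp
  finally have "emeasure (interval_measure (phs s j)) (UNIV - {..C.U j}) = 0"
    by (simp add: D.emeasure_eq_measure)
  then have e2: "emeasure (interval_measure (phs s j)) {C.U j<..} = 0"
    by (simp add: Diff_eq Compl_eq[symmetric] not_le[symmetric] atMost_def greaterThan_def Collect_neg_eq[symmetric])
  have "emeasure (interval_measure (phs s j)) ({..C.L j} \<union> {C.U j<..}) \<le>
      emeasure (interval_measure (phs s j)) {..C.L j} + emeasure (interval_measure (phs s j)) {C.U j<..}"
    by (rule emeasure_subadditive) auto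
  then have "emeasure (interval_measure (phs s j)) ({..C.L j} \<union> {C.U j<..}) = 0"
    using e1 e2 by simp
  then show ?thesis by (intro AE_I[where N="{..C.L j} \<union> {C.U j<..}"]) auto
qed

lemma AE_Pen:
  assumes j: "j \<in> {1..n}" and s: "s \<in> {1..d}" and ts: "0 < t s j"
  shows "AE x in Pen s j. \<forall>u\<in>I s. Lpen l m c v f g n (al s) j \<le> x u \<and> x u \<le> Upen l m c v f g n (al s) j"
proof -
  define MM where "MM = (\<lambda>u. if u \<in> I s then interval_measure (phs s j) else return borel (0::real))"
  interpret P: product_prob_space MM UNIV
    unfolding product_prob_space_def product_prob_space_axioms_def product_sigma_finite_def
    using Pen_comp_prob[OF j s ts] by (auto simp: MM_def prob_space_imp_sigma_finite)
  have PM: "Pen s j = PiM UNIV MM" unfolding Pen_def' MM_def ..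
  show ?thesis unfolding PM
  proof (rule AE_finite_allI)
    show "finite (I s)" by simp
    fix u assume u: "u \<in> I s"
    show "AE x in PiM UNIV MM. Lpen l m c v f g n (al s) j \<le> x u \<and> x u \<le> Upen l m c v f g n (al s) j"
    proof (rule P.AE_component)
      show "u \<in> UNIV" by simp
      have e: "MM u = interval_measure (phs s j)" using u by (simp add: MM_def)
      show "AE y in MM u. Lpen l m c v f g n (al s) j \<le> y \<and> y \<le> Upen l m c v f g n (al s) j"
        unfolding e by (rule AE_interval[OF j s ts])
    qed
  qed
qed

lemma AE_eq_meas:
  assumes "M = N" "AE x in N. P x" shows "AE x in M. P x"
  using assms(2) unfolding assms(1) .

lemma AE_EP:
  assumes i: "i < l" and j: "j \<in> {1..n}"
  shows "AE a in strat j. EP i j a = KK j"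
proof -
  have [measurable]: "(\<lambda>a. EP i j a) \<in> borel_measurable actM" by (rule EP_meas[OF j])
  have pr: "Measurable.pred actM (\<lambda>a. EP i j a = KK j)" by measurable
  show ?thesis
  proof (rule AE_eq_meas[OF strat_def'], rule AE_bind_pmf[where R=actM, OF Dk_space[OF j] Dk_sets pr])
    fix s assume "s \<in> set_pmf (tau j)"
    from set_tau[OF j this] have st: "s \<in> {1..d}" "0 < t s j" by auto
    have "AE x in Pen s j. EP i j (I s, x) = KK j"
      using AE_Pen[OF j st(1) st(2)] by eventually_elim (rule EP_good[OF i j st(1) st(2)])
    then show "AE a in Dk s j. EP i j a = KK j"
      using pr by (subst AE_distr_iff[OF meas_Pair_I]) (auto simp: pred_def)
  qed
qed

lemma strat_payoff_KK:
  assumes i: "i < l" and j: "j \<in> {1..n}"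
  shows "strat_payoff l m c v f Q (\<lambda>i. strat) i j = KK j"
proof -
  interpret S: prob_space "strat j" by (rule strat_prob[OF j])
  have m1: "(\<lambda>a. EP i j a) \<in> borel_measurable (strat j)"
    using EP_meas[OF j] strat_sets by (simp cong: measurable_cong_sets)
  have "strat_payoff l m c v f Q (\<lambda>i. strat) i j = (\<integral>a. EP i j a \<partial>strat j)"
    unfolding strat_payoff_def ..
  also have "\<dots> = (\<integral>a. KK j \<partial>strat j)"
    by (rule integral_cong_AE[OF m1 borel_measurable_const AE_EP[OF i j]])
  also have "\<dots> = KK j" by (simp add: S.prob_space)
  finally show ?thesis .
qed

lemma AE_indep:
  assumes j: "j \<in> {1..n}"
  shows "AE a in strat j. indep_set E (fst a)"
proof -
  have pr: "Measurable.pred actM (\<lambda>a::'v action. indep_set E (fst a))"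
    unfolding actM_def by measurable
  show ?thesis
  proof (rule AE_eq_meas[OF strat_def'], rule AE_bind_pmf[where R=actM, OF Dk_space[OF j] Dk_sets pr])
    fix s assume "s \<in> set_pmf (tau j)"
    from set_tau[OF j this] have st: "s \<in> {1..d}" "0 < t s j" by auto
    have ind: "indep_set E (I s)" using Gmv st(1) unfolding mean_valid_def maximal_indep_set_def by auto
    have "AE x in Pen s j. indep_set E (fst (I s, x))" using ind by simp
    then show "AE a in Dk s j. indep_set E (fst a)"
      using pr by (subst AE_distr_iff[OF meas_Pair_I]) (auto simp: pred_def)
  qed
qed

theorem main: "nash_eq E l m n c v f Q (\<lambda>i. strat)"
  unfolding nash_eq_def
proof (intro allI impI ballI conjI)
  fix i j assume i: "i < l" and j: "j \<in> {1..n}"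
  show "prob_space (strat j)" by (rule strat_prob[OF j])
  show "sets (strat j) = sets actM" by (rule strat_sets)
  show "AE a in strat j. indep_set E (fst a)" by (rule AE_indep[OF j])
  fix a :: "'v action" assume "indep_set E (fst a)"
  then show "exp_payoff l m c v f Q (\<lambda>i. strat) i j a \<le> strat_payoff l m c v f Q (\<lambda>i. strat) i j"
    using dev_EP[OF i j] strat_payoff_KK[OF i j] by simp
qed

end


theorem theorem4:
  fixes E :: "'v::finite \<Rightarrow> 'v \<Rightarrow> bool"
    and l m n d :: nat
    and Q :: "nat pmf"
    and c v :: real
    and g f :: "nat \<Rightarrow> real \<Rightarrow> real"
    and I :: "nat \<Rightarrow> 'v set"
    and t :: "nat \<Rightarrow> nat \<Rightarrow> real"
  assumes graph: "\<forall>u w. E u w \<longrightarrow> E w u" "\<forall>u. \<not> E u u"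
    and lm: "1 \<le> m" "m < l"
    and Q_support: "set_pmf Q \<subseteq> {..n}"
    and Q_sum: "(\<Sum>j=1..n. pmf Q j) < 1"
    and Q_pos: "\<forall>j\<in>{1..n}. pmf Q j > 0"
    and g_cont: "\<forall>j\<in>{1..n}. continuous_on UNIV (g j)"
    and g_mono: "\<forall>j\<in>{1..n}. strict_mono (g j)"
    and g_surj: "\<forall>j\<in>{1..n}. surj (g j)"
    and f_inv: "\<forall>j\<in>{1..n}. f j = inv (g j)"
    and g_order: "\<forall>i\<in>{1..n}. \<forall>j\<in>{1..n}. \<forall>p. j < i \<longrightarrow> g i p < g j p"
    and ratio: "\<forall>i\<in>{1..n}. \<forall>j\<in>{1..n}. \<forall>x y. i < j \<and> g i c < y \<and> y < x \<longrightarrow>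
                  (f i y - c) / (f j y - c) < (f i x - c) / (f j x - c)"
    and f1v: "f 1 v > c"
    and G: "mean_valid E d I"
    and t_family: "\<forall>j\<in>{1..n}.
        (\<forall>s\<in>{1..d}. t s j \<ge> 0) \<and> (\<Sum>s=1..d. t s j) = 1 \<and>
        (\<exists>dj\<in>{1..d}.
           (\<forall>s\<in>{1..d}. s \<le> dj \<longrightarrow> t s j > 0) \<and>
           (\<forall>s\<in>{1..d}. dj < s \<longrightarrow> t s j = 0) \<and>
           (\<forall>s\<in>{1..dj}. real (card (I s)) * Wfun l m (\<Sum>k=j..n. t s k * pmf Q k)
                        = real (card (I 1)) * Wfun l m (\<Sum>k=j..n. t 1 k * pmf Q k)) \<and>
           (\<forall>s. dj \<le> s \<and> s < d \<longrightarrow>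
                real (card (I (Suc s))) * Wfun l m (\<Sum>k=j..n. t (Suc s) k * pmf Q k)
                \<le> real (card (I s)) * Wfun l m (\<Sum>k=j..n. t s k * pmf Q k)))"
  shows "nash_eq E l m n c v f Q (\<lambda>i. eq_strategy l m c v f g n Q d I t)"

proof -
  have d2: "2 \<le> d" using G unfolding mean_valid_def by simp
  have nonempty: "I s \<noteq> {}" if s: "s \<in> {1..d}" for s
  proof
    assume e: "I s = {}"
    have "maximal_indep_set E (I s)" using G s unfolding mean_valid_def by auto
    then have "\<not> indep_set E (insert undefined (I s))" unfolding maximal_indep_set_def using e by auto
    moreover have "indep_set E (insert undefined (I s))" using e graph(2) by (simp add: indep_set_def)
    ultimately show False by simp
  qed
  interpret eqg l m c v f g n d I Q t E
  proof unfold_locales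
    show "1 \<le> m" by (rule lm(1))
    show "m < l" by (rule lm(2))
    show "1 \<le> d" using d2 by simp
    show "\<forall>s\<in>{1..d}. 0 < real (card (I s))"
      using nonempty by (simp add: card_gt_0_iff)
    show "\<forall>s\<in>{1..d}. \<forall>s'\<in>{1..d}. s \<le> s' \<longrightarrow> real (card (I s')) \<le> real (card (I s))"
      using G unfolding mean_valid_def by auto
  qed (use g_cont g_mono g_surj f_inv g_order ratio f1v Q_pos Q_sum t_family G Q_support in auto)
  show ?thesis by (rule main)
qed


end
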